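(* Let $d\ge3$ and $k\in\mathbb Z_{\geq0}$. Let $\mathbf z_{k+1},\dots,\mathbf z_{k+d}$ be a basis of $\mathbb Z^d$ with $|\underline{\mathbf z_{k+1}}|\leq|\underline{\mathbf z_{k+2}}|\leq|\underline{\mathbf z_{k+3}}|$ and $\langle\underline{\mathbf z_{k+1}},\underline{\mathbf z_{k+2}}\rangle\leq0$. If $d\geq4$, assume moreover $\det\underline\Lambda_{k+1,n}>|\underline{\mathbf z_{k+2}}|\det\underline\Lambda_{k+1,n-1}$ for $n=3,\dots,d-1$. Let $\boldsymbol\alpha$ be any point of $\mathfrak S_{k+1}\cap\operatorname{int}\mathfrak S_{k+2}$ satisfying $\langle\boldsymbol\alpha,\mathbf z_{k+2}\rangle\cdot\langle\boldsymbol\alpha_{k+2},\mathbf z_{k+1}\rangle\geq0$. Then: (i) for any $\mathbf z\in\mathbb Z^d$ with $|\underline{\mathbf z}|\leq|\underline{\mathbf z_{k+2}}|$, $\mathbf z\neq\mathbf 0,\pm\mathbf z_{k+2}$, we have $|L_{\boldsymbol\alpha}(\mathbf z)|\geq|L_{\boldsymbol\alpha}(\mathbf z_{k+1})|>|L_{\boldsymbol\alpha}(\mathbf z_{k+2})|$; (ii) $\dfrac{1}{2D_{k+2,d-1}B_{k+1}^{d-1}}\leq|L_{\boldsymbol\alpha}(\mathbf z_{k+1})|\cdot|\underline{\mathbf z_{k+1}}|^{d-1}\leq\dfrac{3}{2D_{k+2,d-1}B_{k+1}^{d-1}}$; (iii) for any $\mathbf z\in\mathbb Z^d$ which is not a multiple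 of $\mathbf z_{k+1}$, is different from $\pm\mathbf z_{k+2}$, and satisfies $|\underline{\mathbf z_{k+1}}|\leq|\underline{\mathbf z}|\leq|\underline{\mathbf z_{k+2}}|$, we have \[|L_{\boldsymbol\alpha}(\mathbf z)|\cdot|\underline{\mathbf z}|^{d-1}\geq\min\Big(\frac{1}{2D_{k+1,d-1}},\ \frac{D_{k+1,2}^{d-1}}{2D_{k+2,d-1}B_{k+1}^{d-1}}\Big).\]
   Context: $|\cdot|$ is the Euclidean norm, $\langle\cdot,\cdot\rangle$ the standard inner product. For $\mathbf x=(x_1,\dots,x_d)\in\mathbb R^d$ write $\underline{\mathbf x}=(x_1,\dots,x_{d-1})$. Let $\pi_d=\{\mathbf x\in\mathbb R^d:x_d=1\}$ and $L_{\boldsymbol\alpha}(\mathbf x)=\langle\boldsymbol\alpha,\mathbf x\rangle$ for $\boldsymbol\alpha\in\pi_d$. For given vectors $\mathbf z_1,\mathbf z_2,\dots\in\mathbb Z^d$: $\det\underline\Lambda_{k,l}=|\underline{\mathbf z_k}\wedge\dots\wedge\underline{\mathbf z_{k+l-1}}|$ ($1\le l\le d-1$); $D_{k,l}=\det\underline\Lambda_{k,l}/|\underline{\mathbf z_k}|^l$; $B_k=|\underline{\mathbf z_{k+1}}|/|\underline{\mathbf z_k}|$; $R_k=1/(2|\underline{\mathbf z_{k+1}}|\det\underline\Lambda_{k,d-1})$; when $\underline{\mathbf z_k},\dots,\underline{\mathbf z_{k+d-2}}$ are linearly independent, $\boldsymbol\alpha_k$ is the unique point of $\pi_d$ orthogonal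 to $\mathbf z_k,\dots,\mathbf z_{k+d-2}$ and $\mathfrak S_k=\{\mathbf x\in\pi_d:|\mathbf x-\boldsymbol\alpha_k|\le R_k\}$, a closed ball in the affine hyperplane $\pi_d$, whose interior $\operatorname{int}\mathfrak S_k$ is taken relative to $\pi_d$. The quantities $B_{k+2}$, $R_{k+2}$, $\mathfrak S_{k+2}$ involve $\mathbf z_{k+d+1}$, which is assumed given. Whenever $\boldsymbol\alpha_k$ or $\mathfrak S_k$ appears it is implicitly assumed well defined. *)

theory Defs
  imports Complex_Main "Jordan_Normal_Form.Determinant"
begin

text \<open>Vectors of Z^d (resp. R^d) are functions nat => int (resp. real) vanishing
  at coordinates >= d; coordinate x_i of the paper is x (i-1).
  The given sequence z_1, z_2, ... is z :: nat => nat => int (z 0 unused).\<close>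

definition ivecs :: "nat \<Rightarrow> (nat \<Rightarrow> int) set" where
  "ivecs d = {v. \<forall>i\<ge>d. v i = 0}"

definition rvecs :: "nat \<Rightarrow> (nat \<Rightarrow> real) set" where
  "rvecs d = {v. \<forall>i\<ge>d. v i = 0}"

definition ulnorm :: "nat \<Rightarrow> (nat \<Rightarrow> int) \<Rightarrow> real" where
  "ulnorm d v = sqrt (\<Sum>i<d-1. (real_of_int (v i))\<^sup>2)"

definition ulinner :: "nat \<Rightarrow> (nat \<Rightarrow> int) \<Rightarrow> (nat \<Rightarrow> int) \<Rightarrow> real" where
  "ulinner d v w = (\<Sum>i<d-1. real_of_int (v i) * real_of_int (w i))"

definition rnorm :: "nat \<Rightarrow> (nat \<Rightarrow> real) \<Rightarrow> real" where
  "rnorm d x = sqrt (\<Sum>i<d. (x i)\<^sup>2)"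

definition pi_d :: "nat \<Rightarrow> (nat \<Rightarrow> real) set" where
  "pi_d d = {x \<in> rvecs d. x (d-1) = 1}"

definition Lf :: "nat \<Rightarrow> (nat \<Rightarrow> real) \<Rightarrow> (nat \<Rightarrow> int) \<Rightarrow> real" where
  "Lf d a x = (\<Sum>i<d. a i * real_of_int (x i))"

text \<open>Norm of the wedge product of l vectors: square root of the Gram determinant.
  detL d z k l = |underline z_k /\ ... /\ underline z_(k+l-1)|\<close>
definition detL :: "nat \<Rightarrow> (nat \<Rightarrow> nat \<Rightarrow> int) \<Rightarrow> nat \<Rightarrow> nat \<Rightarrow> real" where
  "detL d z k l = sqrt (det (mat l l (\<lambda>(i,j). ulinner d (z (k+i)) (z (k+j)))))"

definition Dq :: "nat \<Rightarrow> (nat \<Rightarrow> nat \<Rightarrow> int) \<Rightarrow> nat \<Rightarrow> nat \<Rightarrow> real" where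
  "Dq d z k l = detL d z k l / (ulnorm d (z k)) ^ l"

definition Bq :: "nat \<Rightarrow> (nat \<Rightarrow> nat \<Rightarrow> int) \<Rightarrow> nat \<Rightarrow> real" where
  "Bq d z k = ulnorm d (z (k+1)) / ulnorm d (z k)"

definition Rq :: "nat \<Rightarrow> (nat \<Rightarrow> nat \<Rightarrow> int) \<Rightarrow> nat \<Rightarrow> real" where
  "Rq d z k = 1 / (2 * ulnorm d (z (k+1)) * detL d z k (d-1))"

definition ul_indep :: "nat \<Rightarrow> (nat \<Rightarrow> nat \<Rightarrow> int) \<Rightarrow> nat \<Rightarrow> bool" where
  "ul_indep d z k = (\<forall>c :: nat \<Rightarrow> real.
     (\<forall>i<d-1. (\<Sum>j<d-1. c j * real_of_int (z (k+j) i)) = 0) \<longrightarrow> (\<forall>j<d-1. c j = 0))"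

definition alphaq :: "nat \<Rightarrow> (nat \<Rightarrow> nat \<Rightarrow> int) \<Rightarrow> nat \<Rightarrow> (nat \<Rightarrow> real)" where
  "alphaq d z k = (THE a. a \<in> pi_d d \<and> (\<forall>j<d-1. Lf d a (z (k+j)) = 0))"

definition Sq :: "nat \<Rightarrow> (nat \<Rightarrow> nat \<Rightarrow> int) \<Rightarrow> nat \<Rightarrow> (nat \<Rightarrow> real) set" where
  "Sq d z k = {x \<in> pi_d d. rnorm d (\<lambda>i. x i - alphaq d z k i) \<le> Rq d z k}"

definition rel_int_pi :: "nat \<Rightarrow> (nat \<Rightarrow> real) set \<Rightarrow> (nat \<Rightarrow> real) set" where
  "rel_int_pi d S = {x \<in> S. \<exists>e>0. \<forall>y\<in>pi_d d. rnorm d (\<lambda>i. y i - x i) < e \<longrightarrow> y \<in> S}"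

definition is_Zbasis :: "nat \<Rightarrow> (nat \<Rightarrow> nat \<Rightarrow> int) \<Rightarrow> nat \<Rightarrow> bool" where
  "is_Zbasis d z k = ((\<forall>j\<in>{1..d}. z (k+j) \<in> ivecs d) \<and>
     (\<forall>w\<in>ivecs d. \<exists>!c. (\<forall>j. j \<notin> {1..d} \<longrightarrow> c j = 0) \<and>
        (\<forall>i<d. w i = (\<Sum>j=1..d. c j * z (k+j) i))))"

end

theory Submission
  imports Defs
begin


lemma det_pm1:
  fixes d :: nat and v :: "nat \<Rightarrow> nat \<Rightarrow> int"
  assumes hspan: "\<forall>w\<in>ivecs d. \<exists>c::nat\<Rightarrow>int. \<forall>i<d. w i = (\<Sum>j<d. c j * v j i)"
  shows "\<bar>det (mat d d (\<lambda>(i,j). v i j))\<bar> = 1"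
proof -
  define V where "V = mat d d (\<lambda>(i,j). v i j)"
  have "\<forall>r. \<exists>c::nat\<Rightarrow>int. r < d \<longrightarrow> (\<forall>i<d. (if i = r then 1 else 0) = (\<Sum>j<d. c j * v j i))"
  proof
    fix r
    show "\<exists>c::nat\<Rightarrow>int. r < d \<longrightarrow> (\<forall>i<d. (if i = r then 1 else 0) = (\<Sum>j<d. c j * v j i))"
    proof (cases "r < d")
      case True
      have "(\<lambda>i. if i = r then 1 else 0::int) \<in> ivecs d" using True by (auto simp: ivecs_def)
      then obtain c where "\<forall>i<d. (if i = r then 1 else 0) = (\<Sum>j<d. c j * v j i)" using hspan by fastforce
      then show ?thesis by blast
    qed auto
  qed
  then obtain C where hC: "\<And>r i. r < d \<Longrightarrow> i < d \<Longrightarrow> (if i = r then 1 else 0) = (\<Sum>j<d. C r j * v j i)"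
    by metis
  define CM where "CM = mat d d (\<lambda>(r,j). C r j)"
  have "CM * V = 1\<^sub>m d"
  proof (rule eq_matI)
    fix r i assume "r < dim_row (1\<^sub>m d)" "i < dim_col (1\<^sub>m d)"
    then have ri: "r < d" "i < d" by auto
    have "(CM * V) $$ (r, i) = (\<Sum>j<d. C r j * v j i)"
      using ri by (simp add: CM_def V_def scalar_prod_def lessThan_atLeast0)
    also have "\<dots> = (if i = r then 1 else 0)" using hC[OF ri] by simp
    finally show "(CM * V) $$ (r, i) = 1\<^sub>m d $$ (r, i)" using ri by auto
  qed (auto simp: CM_def V_def)
  then have "det CM * det V = 1"
    by (metis CM_def V_def det_mult det_one mat_carrier)
  then show ?thesis unfolding V_def[symmetric] using zmult_eq_1_iff by auto
qed


lemma alpha_lemma: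
  fixes d :: nat and v :: "nat \<Rightarrow> nat \<Rightarrow> int"
  assumes hd: "d \<ge> 2"
    and hspan: "\<forall>w\<in>ivecs d. \<exists>c::nat\<Rightarrow>int. \<forall>i<d. w i = (\<Sum>j<d. c j * v j i)"
    and hind: "\<forall>c :: nat \<Rightarrow> real. (\<forall>i<d-1. (\<Sum>j<d-1. c j * real_of_int (v j i)) = 0) \<longrightarrow> (\<forall>j<d-1. c j = 0)"
  shows "\<exists>!a. a \<in> pi_d d \<and> (\<forall>j<d-1. Lf d a (v j) = 0)"
    and "\<And>a. a \<in> pi_d d \<Longrightarrow> (\<forall>j<d-1. Lf d a (v j) = 0) \<Longrightarrow>
          \<bar>Lf d a (v (d-1))\<bar> * sqrt (det (mat (d-1) (d-1) (\<lambda>(i,j). ulinner d (v i) (v j)))) = 1"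
proof -
  obtain n where dn: "d = Suc n" using hd by (cases d) auto
  define Vi where "Vi = mat d d (\<lambda>(i,j). v i j)"
  define Vr where "Vr = mat d d (\<lambda>(i,j). real_of_int (v i j))"
  define M where "M = mat n n (\<lambda>(i,j). real_of_int (v i j))"
  have Vr_carr: "Vr \<in> carrier_mat d d" by (simp add: Vr_def)
  have "Vr = of_int_hom.mat_hom Vi"
    by (rule eq_matI) (auto simp: Vr_def Vi_def)
  then have detV: "\<bar>det Vr\<bar> = 1"
    using det_pm1[OF hspan] unfolding Vi_def
    by (metis (no_types) of_int_abs of_int_hom.hom_det of_int_1 Vi_def)
  have hind': "\<forall>c :: nat \<Rightarrow> real. (\<forall>i<n. (\<Sum>j<n. c j * real_of_int (v j i)) = 0) \<longrightarrow> (\<forall>j<n. c j = 0)"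
    using hind dn by simp
  have detM: "det M \<noteq> 0"
  proof
    assume "det M = 0"
    then have "det (transpose_mat M) = 0" using det_transpose[of M n] by (simp add: M_def)
    then obtain x where x: "x \<in> carrier_vec n" "x \<noteq> 0\<^sub>v n" "transpose_mat M *\<^sub>v x = 0\<^sub>v n"
      using det_0_iff_vec_prod_zero_field[of "transpose_mat M" n] by (auto simp: M_def)
    have "\<forall>i<n. (\<Sum>j<n. x $ j * real_of_int (v j i)) = 0"
    proof (intro allI impI)
      fix i assume i: "i < n"
      have "(transpose_mat M *\<^sub>v x) $ i = 0" using x(3) i by simp
      then show "(\<Sum>j<n. x $ j * real_of_int (v j i)) = 0"
        using i x(1) by (simp add: M_def scalar_prod_def lessThan_atLeast0 mult.commute)
    qed
    then have "\<forall>j<n. x $ j = 0" using hind' by blast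
    then have "x = 0\<^sub>v n" using x(1) by (intro eq_vecI) auto
    then show False using x(2) by simp
  qed
  have Mdel: "mat_delete Vr n n = M"
    by (rule eq_matI) (auto simp: mat_delete_def Vr_def M_def dn)
  have cofnn: "cofactor Vr n n = det M"
    by (simp add: cofactor_def Mdel)
  have adj: "Vr * adj_mat Vr = det Vr \<cdot>\<^sub>m 1\<^sub>m d" using adj_mat[OF Vr_carr] by simp
  have key: "\<And>i. i < d \<Longrightarrow> (\<Sum>t<d. real_of_int (v i t) * cofactor Vr n t) = (if i = n then det Vr else 0)"
  proof -
    fix i assume i: "i < d"
    have "(Vr * adj_mat Vr) $$ (i, n) = (det Vr \<cdot>\<^sub>m 1\<^sub>m d) $$ (i, n)" using adj by simp
    moreover have "(Vr * adj_mat Vr) $$ (i, n) = (\<Sum>t<d. real_of_int (v i t) * cofactor Vr n t)"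
      using i dn by (simp add: Vr_def adj_mat_def scalar_prod_def lessThan_atLeast0)
    moreover have "(det Vr \<cdot>\<^sub>m 1\<^sub>m d) $$ (i, n) = (if i = n then det Vr else 0)"
      using i dn by simp
    ultimately show "(\<Sum>t<d. real_of_int (v i t) * cofactor Vr n t) = (if i = n then det Vr else 0)"
      by simp
  qed
  define a where "a t = (if t < d then cofactor Vr n t / det M else 0)" for t
  have a_pi: "a \<in> pi_d d"
    using detM cofnn dn by (simp add: pi_d_def rvecs_def a_def)
  have aL: "\<And>i. i < d \<Longrightarrow> Lf d a (v i) = (if i = n then det Vr / det M else 0)"
  proof -
    fix i assume i: "i < d"
    have "Lf d a (v i) = (\<Sum>t<d. real_of_int (v i t) * cofactor Vr n t) / det M"
      by (simp add: Lf_def a_def sum_divide_distrib mult.commute)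
    then show "Lf d a (v i) = (if i = n then det Vr / det M else 0)" using key[OF i] by simp
  qed
  have uniq: "\<And>b. b \<in> pi_d d \<Longrightarrow> (\<forall>j<d-1. Lf d b (v j) = 0) \<Longrightarrow> b = a"
  proof -
    fix b assume b: "b \<in> pi_d d" "\<forall>j<d-1. Lf d b (v j) = 0"
    define x where "x = vec n (\<lambda>t. a t - b t)"
    have "M *\<^sub>v x = 0\<^sub>v n"
    proof (rule eq_vecI)
      fix i assume "i < dim_vec (0\<^sub>v n)"
      then have i: "i < n" by simp
      have "Lf d a (v i) - Lf d b (v i) = 0" using aL[of i] b(2) i dn by simp
      moreover have "Lf d a (v i) - Lf d b (v i) = (\<Sum>t<n. real_of_int (v i t) * (a t - b t))
          + real_of_int (v i n) * (a n - b n)"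
        by (simp add: Lf_def dn sum_subtractf[symmetric] algebra_simps)
      moreover have "a n = 1" "b n = 1" using a_pi b(1) dn by (auto simp: pi_d_def)
      ultimately have "(\<Sum>t<n. real_of_int (v i t) * (a t - b t)) = 0" by simp
      then show "(M *\<^sub>v x) $ i = 0\<^sub>v n $ i"
        using i by (simp add: M_def x_def scalar_prod_def lessThan_atLeast0)
    qed (simp add: M_def)
    moreover have "x \<in> carrier_vec n" by (simp add: x_def)
    ultimately have "x = 0\<^sub>v n"
      using det_0_iff_vec_prod_zero_field[of M n] detM by (auto simp: M_def)
    then have lt: "\<And>t. t < n \<Longrightarrow> a t = b t"
      by (metis x_def index_vec index_zero_vec(1) eq_iff_diff_eq_0)
    show "b = a"
    proof
      fix t
      show "b t = a t"
      proof (cases "t < n")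
        case True then show ?thesis using lt by simp
      next
        case False
        then show ?thesis
        proof (cases "t = n")
          case True then show ?thesis using a_pi b(1) dn by (auto simp: pi_d_def)
        next
          case False
          then have "t \<ge> d" using \<open>\<not> t < n\<close> dn by simp
          then show ?thesis using a_pi b(1) by (auto simp: pi_d_def rvecs_def)
        qed
      qed
    qed
  qed
  show "\<exists>!a. a \<in> pi_d d \<and> (\<forall>j<d-1. Lf d a (v j) = 0)"
  proof (rule ex1I[of _ a])
    show "a \<in> pi_d d \<and> (\<forall>j<d-1. Lf d a (v j) = 0)" using a_pi aL dn by simp
  qed (use uniq in blast)
  fix a' assume a': "a' \<in> pi_d d" "\<forall>j<d-1. Lf d a' (v j) = 0"
  then have "a' = a" using uniq by blast
  have G: "mat (d-1) (d-1) (\<lambda>(i,j). ulinner d (v i) (v j)) = M * transpose_mat M"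
    by (rule eq_matI) (auto simp: M_def ulinner_def dn scalar_prod_def lessThan_atLeast0)
  have "det (M * transpose_mat M) = det M * det M"
    by (metis M_def det_mult det_transpose mat_carrier transpose_carrier_mat)
  then have "sqrt (det (mat (d-1) (d-1) (\<lambda>(i,j). ulinner d (v i) (v j)))) = \<bar>det M\<bar>"
    using G by (simp add: real_sqrt_mult)
  then show "\<bar>Lf d a' (v (d-1))\<bar> * sqrt (det (mat (d-1) (d-1) (\<lambda>(i,j). ulinner d (v i) (v j)))) = 1"
    using \<open>a' = a\<close> aL[of n] dn detV detM by (simp add: abs_divide)
qed


definition gram :: "nat \<Rightarrow> (nat \<Rightarrow> nat \<Rightarrow> real) \<Rightarrow> nat \<Rightarrow> real" where
  "gram m u l = det (mat l l (\<lambda>(i,j). \<Sum>t<m. u i t * u j t))"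

lemma if01: "(c::real) * (if P then 1 else 0) * y = (if P then c * y else 0)" by simp

lemma schur:
  fixes u :: "nat \<Rightarrow> nat \<Rightarrow> real" and m n :: nat
  assumes indep: "\<forall>x. (\<forall>t<m. (\<Sum>i<Suc n. x i * u i t) = 0) \<longrightarrow> (\<forall>i<Suc n. x i = 0)"
  shows "\<exists>lam. (\<forall>i<n. (\<Sum>t<m. (u n t - (\<Sum>j<n. lam j * u j t)) * u i t) = 0) \<and>
           gram m u (Suc n) = gram m u n * (\<Sum>t<m. (u n t - (\<Sum>j<n. lam j * u j t))\<^sup>2)"
proof -
  define A where "A = mat n n (\<lambda>(i,j). \<Sum>t<m. u i t * u j t)"
  have Acarr: "A \<in> carrier_mat n n" by (simp add: A_def)
  have detA: "det A \<noteq> 0"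
  proof
    assume "det A = 0"
    then obtain x where x: "x \<in> carrier_vec n" "x \<noteq> 0\<^sub>v n" "A *\<^sub>v x = 0\<^sub>v n"
      using det_0_iff_vec_prod_zero_field[OF Acarr] by auto
    define y where "y i = (if i < n then x $ i else 0)" for i
    define s where "s t = (\<Sum>i<n. x $ i * u i t)" for t
    have "(\<Sum>i<n. x $ i * (A *\<^sub>v x) $ i) = 0" using x(3) by simp
    moreover have "(\<Sum>i<n. x $ i * (A *\<^sub>v x) $ i) = (\<Sum>t<m. (s t)\<^sup>2)"
    proof -
      have "(\<Sum>i<n. x $ i * (A *\<^sub>v x) $ i) = (\<Sum>i<n. x $ i * (\<Sum>j<n. (\<Sum>t<m. u i t * u j t) * x $ j))"
        using x(1) by (intro sum.cong) (auto simp: A_def scalar_prod_def lessThan_atLeast0)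
      also have "\<dots> = (\<Sum>i<n. \<Sum>j<n. \<Sum>t<m. (x $ i * u i t) * (x $ j * u j t))"
        by (simp add: sum_distrib_left sum_distrib_right mult_ac)
      also have "\<dots> = (\<Sum>i<n. \<Sum>t<m. \<Sum>j<n. (x $ i * u i t) * (x $ j * u j t))"
        by (rule sum.cong[OF refl], rule sum.swap)
      also have "\<dots> = (\<Sum>t<m. \<Sum>i<n. \<Sum>j<n. (x $ i * u i t) * (x $ j * u j t))"
        by (rule sum.swap)
      also have "\<dots> = (\<Sum>t<m. (\<Sum>i<n. x $ i * u i t) * (\<Sum>j<n. x $ j * u j t))"
        by (simp add: sum_product)
      finally show ?thesis by (simp add: s_def power2_eq_square)
    qed
    ultimately have "(\<Sum>t<m. (s t)\<^sup>2) = 0" by simp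
    then have "\<forall>t<m. s t = 0" by (simp add: sum_nonneg_eq_0_iff)
    then have "\<forall>t<m. (\<Sum>i<Suc n. y i * u i t) = 0" by (simp add: s_def y_def)
    then have "\<forall>i<Suc n. y i = 0" using indep by blast
    then have "\<And>i. i < n \<Longrightarrow> x $ i = 0" unfolding y_def by (metis less_SucI)
    then have "x = 0\<^sub>v n" using x(1) by (intro eq_vecI) auto
    then show False using x(2) by simp
  qed
  define b where "b = vec n (\<lambda>i. \<Sum>t<m. u n t * u i t)"
  define lv where "lv = (1 / det A) \<cdot>\<^sub>v (adj_mat A *\<^sub>v b)"
  have "A *\<^sub>v lv = b"
  proof -
    have "A *\<^sub>v lv = (1 / det A) \<cdot>\<^sub>v ((A * adj_mat A) *\<^sub>v b)"
      using adj_mat(1)[OF Acarr] Acarr by (simp add: lv_def b_def mult_mat_vec assoc_mult_mat_vec)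
    also have "\<dots> = b"
    proof (rule eq_vecI)
      fix i assume "i < dim_vec b"
      then have i: "i < n" by (simp add: b_def)
      have "((A * adj_mat A) *\<^sub>v b) $ i = det A * b $ i"
        using i adj_mat(2)[OF Acarr]
        by (simp add: b_def scalar_prod_def if01)
      then show "(1 / det A \<cdot>\<^sub>v ((A * adj_mat A) *\<^sub>v b)) $ i = b $ i"
        using i detA by (simp add: b_def adj_mat(2)[OF Acarr])
    qed (simp add: b_def adj_mat(2)[OF Acarr])
    finally show ?thesis .
  qed
  define lam where "lam j = lv $ j" for j
  have lamprop: "\<And>i. i < n \<Longrightarrow> (\<Sum>j<n. lam j * (\<Sum>t<m. u i t * u j t)) = (\<Sum>t<m. u n t * u i t)"
  proof -
    fix i assume i: "i < n"
    have "(A *\<^sub>v lv) $ i = b $ i" using \<open>A *\<^sub>v lv = b\<close> by simp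
    moreover have "dim_vec lv = n" using adj_mat(1)[OF Acarr] by (simp add: lv_def b_def)
    ultimately show "(\<Sum>j<n. lam j * (\<Sum>t<m. u i t * u j t)) = (\<Sum>t<m. u n t * u i t)"
      using i by (simp add: A_def b_def lam_def scalar_prod_def lessThan_atLeast0 mult.commute)
  qed
  define q where "q t = u n t - (\<Sum>j<n. lam j * u j t)" for t
  have orth: "\<And>i. i < n \<Longrightarrow> (\<Sum>t<m. q t * u i t) = 0"
  proof -
    fix i assume i: "i < n"
    have "(\<Sum>t<m. q t * u i t) = (\<Sum>t<m. u n t * u i t) - (\<Sum>j<n. lam j * (\<Sum>t<m. u i t * u j t))"
    proof -
      have "(\<Sum>t<m. q t * u i t) = (\<Sum>t<m. u n t * u i t) - (\<Sum>t<m. \<Sum>j<n. lam j * (u i t * u j t))"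
        by (simp add: q_def right_diff_distrib left_diff_distrib sum_subtractf sum_distrib_left sum_distrib_right mult_ac)
      also have "(\<Sum>t<m. \<Sum>j<n. lam j * (u i t * u j t)) = (\<Sum>j<n. \<Sum>t<m. lam j * (u i t * u j t))"
        by (rule sum.swap)
      finally show ?thesis by (simp add: sum_distrib_left)
    qed
    then show "(\<Sum>t<m. q t * u i t) = 0" using lamprop[OF i] by simp
  qed
  define w where "w i t = (if i = n then q t else u i t)" for i t
  define U where "U = mat (Suc n) m (\<lambda>(i,t). u i t)"
  define E where "E = mat (Suc n) (Suc n) (\<lambda>(i,j). if i = n then (if j = n then 1 else - lam j) else (if i = j then 1 else 0))"
  define W where "W = mat (Suc n) m (\<lambda>(i,t). w i t)"
  have Ucarr: "U \<in> carrier_mat (Suc n) m" by (simp add: U_def)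
  have Ecarr: "E \<in> carrier_mat (Suc n) (Suc n)" by (simp add: E_def)
  have EU: "E * U = W"
  proof (rule eq_matI)
    fix i t assume "i < dim_row W" "t < dim_col W"
    then have it: "i < Suc n" "t < m" by (auto simp: W_def)
    show "(E * U) $$ (i, t) = W $$ (i, t)"
    proof (cases "i = n")
      case True
      have "(E * U) $$ (i, t) = (\<Sum>j<Suc n. (if j = n then 1 else - lam j) * u j t)"
        using it True by (simp add: E_def U_def scalar_prod_def lessThan_atLeast0)
      also have "\<dots> = u n t - (\<Sum>j<n. lam j * u j t)"
        by (simp add: sum_negf)
      finally show ?thesis using it True by (simp add: W_def w_def q_def)
    next
      case False
      have "(E * U) $$ (i, t) = (\<Sum>j<Suc n. (if i = j then 1 else 0) * u j t)"
        using it False by (simp add: E_def U_def scalar_prod_def lessThan_atLeast0)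
      also have "\<dots> = u i t" using it by (simp add: if01[where c=1, simplified])
      finally show ?thesis using it False by (simp add: W_def w_def)
    qed
  qed (auto simp: E_def U_def W_def)
  have detE: "det E = 1"
  proof -
    have "det E = prod_list (diag_mat E)"
      by (rule det_lower_triangular[OF _ Ecarr]) (auto simp: E_def)
    also have "diag_mat E = map (\<lambda>i. 1) [0..<Suc n]"
      unfolding diag_mat_def by (rule map_cong) (auto simp: E_def)
    finally show ?thesis by (simp add: map_replicate_const)
  qed
  have G1: "mat (Suc n) (Suc n) (\<lambda>(i,j). \<Sum>t<m. u i t * u j t) = U * transpose_mat U"
    by (rule eq_matI) (auto simp: U_def scalar_prod_def lessThan_atLeast0)
  define G' where "G' = mat (Suc n) (Suc n) (\<lambda>(i,j). \<Sum>t<m. w i t * w j t)"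
  have G2: "G' = W * transpose_mat W"
    by (rule eq_matI) (auto simp: G'_def W_def scalar_prod_def lessThan_atLeast0)
  have "W * transpose_mat W = E * (U * transpose_mat U) * transpose_mat E"
  proof -
    have "W * transpose_mat W = (E * U) * (transpose_mat U * transpose_mat E)"
      unfolding EU[symmetric] by (simp add: transpose_mult[OF Ecarr Ucarr])
    also have "\<dots> = E * (U * (transpose_mat U * transpose_mat E))"
      by (rule assoc_mult_mat[OF Ecarr Ucarr]) (use Ucarr Ecarr in auto)
    also have "U * (transpose_mat U * transpose_mat E) = (U * transpose_mat U) * transpose_mat E"
      by (rule assoc_mult_mat[symmetric, OF Ucarr]) (use Ucarr Ecarr in auto)
    also have "E * ((U * transpose_mat U) * transpose_mat E) = E * (U * transpose_mat U) * transpose_mat E"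
      by (rule assoc_mult_mat[symmetric, OF Ecarr]) (use Ucarr Ecarr in auto)
    finally show ?thesis .
  qed
  then have "det G' = det E * det (U * transpose_mat U) * det (transpose_mat E)"
    using Ucarr Ecarr G2
    by (simp add: det_mult[of _ "Suc n"])
  then have detG': "det G' = gram m u (Suc n)"
    using detE det_transpose[OF Ecarr] G1 by (simp add: gram_def)
  have "det G' = (\<Sum>i<Suc n. G' $$ (i, n) * cofactor G' i n)"
    by (rule laplace_expansion_column) (auto simp: G'_def)
  also have "\<dots> = G' $$ (n, n) * cofactor G' n n"
    using orth by (simp add: G'_def w_def mult.commute)
  also have "cofactor G' n n = gram m u n"
  proof -
    have "mat_delete G' n n = mat n n (\<lambda>(i,j). \<Sum>t<m. u i t * u j t)"
      by (rule eq_matI) (auto simp: mat_delete_def G'_def w_def)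
    then show ?thesis by (simp add: cofactor_def gram_def)
  qed
  finally have "gram m u (Suc n) = gram m u n * (\<Sum>t<m. (q t)\<^sup>2)"
    using detG' by (simp add: G'_def w_def power2_eq_square mult.commute)
  then show ?thesis using orth unfolding q_def by blast
qed


lemma indep_mono:
  fixes u :: "nat \<Rightarrow> nat \<Rightarrow> real"
  assumes "\<forall>x. (\<forall>t<m. (\<Sum>i<N. x i * u i t) = 0) \<longrightarrow> (\<forall>i<N. x i = 0)" and "l \<le> N"
  shows "\<forall>x. (\<forall>t<m. (\<Sum>i<l. x i * u i t) = 0) \<longrightarrow> (\<forall>i<l. x i = 0)"
proof (intro allI impI)
  fix x :: "nat \<Rightarrow> real" and i
  assume h: "\<forall>t<m. (\<Sum>i<l. x i * u i t) = 0" and i: "i < l"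
  define y where "y j = (if j < l then x j else 0)" for j
  have "(\<Sum>i<N. y i * u i t) = (\<Sum>i<l. x i * u i t)" for t
  proof -
    have "(\<Sum>i<N. y i * u i t) = (\<Sum>i\<in>{..<l} \<union> {l..<N}. y i * u i t)"
      using assms(2) by (intro sum.cong) auto
    also have "\<dots> = (\<Sum>i<l. y i * u i t) + (\<Sum>i\<in>{l..<N}. y i * u i t)"
      by (rule sum.union_disjoint) auto
    also have "\<dots> = (\<Sum>i<l. x i * u i t)" by (simp add: y_def)
    finally show ?thesis .
  qed
  then have "\<forall>i<N. y i = 0" using assms(1) h by simp
  then show "x i = 0" using i assms(2) by (auto simp: y_def dest!: spec[of _ i])
qed

lemma gram_pos:
  fixes u :: "nat \<Rightarrow> nat \<Rightarrow> real"
  assumes indep: "\<forall>x. (\<forall>t<m. (\<Sum>i<N. x i * u i t) = 0) \<longrightarrow> (\<forall>i<N. x i = 0)"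
  shows "l \<le> N \<Longrightarrow> gram m u l > 0"
proof (induction l)
  case 0
  then show ?case by (simp add: gram_def)
next
  case (Suc l)
  have ind: "\<forall>x. (\<forall>t<m. (\<Sum>i<Suc l. x i * u i t) = 0) \<longrightarrow> (\<forall>i<Suc l. x i = 0)"
    using indep_mono[OF indep Suc.prems] .
  obtain lam where lam: "\<forall>i<l. (\<Sum>t<m. (u l t - (\<Sum>j<l. lam j * u j t)) * u i t) = 0"
    "gram m u (Suc l) = gram m u l * (\<Sum>t<m. (u l t - (\<Sum>j<l. lam j * u j t))\<^sup>2)"
    using schur[OF ind] by blast
  have pos: "gram m u l > 0" using Suc by simp
  have "(\<Sum>t<m. (u l t - (\<Sum>j<l. lam j * u j t))\<^sup>2) > 0"
  proof (rule ccontr)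
    assume "\<not> ?thesis"
    then have "(\<Sum>t<m. (u l t - (\<Sum>j<l. lam j * u j t))\<^sup>2) = 0"
      using sum_nonneg[of "{..<m}" "\<lambda>t. (u l t - (\<Sum>j<l. lam j * u j t))\<^sup>2"] by simp
    then have z: "\<forall>t<m. u l t - (\<Sum>j<l. lam j * u j t) = 0"
      by (simp add: sum_nonneg_eq_0_iff)
    define x where "x j = (if j = l then 1 else - lam j)" for j
    have "\<forall>t<m. (\<Sum>i<Suc l. x i * u i t) = 0"
      using z by (simp add: x_def sum_negf)
    then have "x l = 0" using ind by blast
    then show False by (simp add: x_def)
  qed
  then show ?case using pos lam(2) by simp
qed

lemma gram_proj:
  fixes u :: "nat \<Rightarrow> nat \<Rightarrow> real" and c :: "nat \<Rightarrow> real"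
  assumes indep: "\<forall>x. (\<forall>t<m. (\<Sum>i<Suc n. x i * u i t) = 0) \<longrightarrow> (\<forall>i<Suc n. x i = 0)"
  shows "(c n)\<^sup>2 * gram m u (Suc n) \<le> gram m u n * (\<Sum>t<m. (\<Sum>i<Suc n. c i * u i t)\<^sup>2)"
proof -
  obtain lam where orth: "\<forall>i<n. (\<Sum>t<m. (u n t - (\<Sum>j<n. lam j * u j t)) * u i t) = 0"
    and G: "gram m u (Suc n) = gram m u n * (\<Sum>t<m. (u n t - (\<Sum>j<n. lam j * u j t))\<^sup>2)"
    using schur[OF indep] by blast
  define q where "q t = u n t - (\<Sum>j<n. lam j * u j t)" for t
  define p where "p t = (\<Sum>i<n. (c i + c n * lam i) * u i t)" for t
  have gpos: "gram m u n > 0" using gram_pos[OF indep, of n] by simp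
  have w: "(\<Sum>i<Suc n. c i * u i t) = p t + c n * q t" for t
    by (simp add: p_def q_def algebra_simps sum.distrib sum_distrib_left)
  have pq: "(\<Sum>t<m. p t * q t) = 0"
  proof -
    have "(\<Sum>t<m. p t * q t) = (\<Sum>t<m. \<Sum>i<n. (c i + c n * lam i) * (q t * u i t))"
      by (simp add: p_def sum_distrib_right sum_distrib_left mult_ac)
    also have "\<dots> = (\<Sum>i<n. \<Sum>t<m. (c i + c n * lam i) * (q t * u i t))" by (rule sum.swap)
    also have "\<dots> = (\<Sum>i<n. (c i + c n * lam i) * (\<Sum>t<m. q t * u i t))"
      by (simp add: sum_distrib_left)
    also have "\<dots> = 0" using orth by (simp add: q_def)
    finally show ?thesis .
  qed
  have "(\<Sum>t<m. (\<Sum>i<Suc n. c i * u i t)\<^sup>2) = (\<Sum>t<m. (p t)\<^sup>2) + 2 * c n * (\<Sum>t<m. p t * q t) + (c n)\<^sup>2 * (\<Sum>t<m. (q t)\<^sup>2)"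
  proof -
    have "(\<Sum>t<m. (\<Sum>i<Suc n. c i * u i t)\<^sup>2) = (\<Sum>t<m. (p t + c n * q t)\<^sup>2)"
      by (rule sum.cong[OF refl]) (simp only: w)
    also have "\<dots> = (\<Sum>t<m. (p t)\<^sup>2 + 2 * c n * (p t * q t) + (c n)\<^sup>2 * (q t)\<^sup>2)"
      by (rule sum.cong[OF refl]) (simp add: power2_sum power_mult_distrib mult_ac)
    also have "\<dots> = (\<Sum>t<m. (p t)\<^sup>2) + 2 * c n * (\<Sum>t<m. p t * q t) + (c n)\<^sup>2 * (\<Sum>t<m. (q t)\<^sup>2)"
      by (simp add: sum.distrib sum_distrib_left)
    finally show ?thesis .
  qed
  also have "\<dots> \<ge> (c n)\<^sup>2 * (\<Sum>t<m. (q t)\<^sup>2)" using pq by (simp add: sum_nonneg)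
  finally have "(c n)\<^sup>2 * (\<Sum>t<m. (q t)\<^sup>2) \<le> (\<Sum>t<m. (\<Sum>i<Suc n. c i * u i t)\<^sup>2)" .
  then have "gram m u n * ((c n)\<^sup>2 * (\<Sum>t<m. (q t)\<^sup>2)) \<le> gram m u n * (\<Sum>t<m. (\<Sum>i<Suc n. c i * u i t)\<^sup>2)"
    using gpos by (intro mult_left_mono) auto
  then show ?thesis using G by (simp add: q_def mult_ac)
qed


lemma cs_sum:
  fixes x y :: "nat \<Rightarrow> real"
  shows "(\<Sum>i\<in>A. x i * y i)\<^sup>2 \<le> (\<Sum>i\<in>A. (x i)\<^sup>2) * (\<Sum>i\<in>A. (y i)\<^sup>2)"
proof (cases "finite A")
  case fin: True
  define X where "X = (\<Sum>i\<in>A. (x i)\<^sup>2)"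
  define Y where "Y = (\<Sum>i\<in>A. (y i)\<^sup>2)"
  define P where "P = (\<Sum>i\<in>A. x i * y i)"
  have X0: "X \<ge> 0" by (simp add: X_def sum_nonneg)
  show ?thesis
  proof (cases "X = 0")
    case True
    then have "\<forall>i\<in>A. x i = 0" using fin by (simp add: X_def sum_nonneg_eq_0_iff)
    then show ?thesis by simp
  next
    case False
    then have Xp: "X > 0" using X0 by simp
    have "0 \<le> (\<Sum>i\<in>A. (X * y i - P * x i)\<^sup>2)" by (simp add: sum_nonneg)
    also have "\<dots> = (\<Sum>i\<in>A. X\<^sup>2 * (y i)\<^sup>2 - 2 * X * P * (x i * y i) + P\<^sup>2 * (x i)\<^sup>2)"
      by (rule sum.cong) (simp_all add: power2_diff power_mult_distrib mult_ac)
    also have "\<dots> = X\<^sup>2 * (\<Sum>i\<in>A. (y i)\<^sup>2) - 2 * X * P * (\<Sum>i\<in>A. x i * y i) + P\<^sup>2 * (\<Sum>i\<in>A. (x i)\<^sup>2)"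
      by (simp add: sum.distrib sum_subtractf sum_distrib_left)
    also have "\<dots> = X\<^sup>2 * Y - 2 * X * P * P + P\<^sup>2 * X"
      by (simp only: X_def[symmetric] Y_def[symmetric] P_def[symmetric])
    also have "\<dots> = X * (X * Y - P\<^sup>2)" by (simp add: algebra_simps power2_eq_square)
    finally have "0 \<le> X * Y - P\<^sup>2" using Xp by (simp add: zero_le_mult_iff)
    then show ?thesis by (simp add: X_def Y_def P_def)
  qed
qed simp

lemma cs_abs:
  fixes x y :: "nat \<Rightarrow> real"
  shows "\<bar>\<Sum>i\<in>A. x i * y i\<bar> \<le> sqrt (\<Sum>i\<in>A. (x i)\<^sup>2) * sqrt (\<Sum>i\<in>A. (y i)\<^sup>2)"
proof -
  have "\<bar>\<Sum>i\<in>A. x i * y i\<bar> = sqrt ((\<Sum>i\<in>A. x i * y i)\<^sup>2)" by simp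
  also have "\<dots> \<le> sqrt ((\<Sum>i\<in>A. (x i)\<^sup>2) * (\<Sum>i\<in>A. (y i)\<^sup>2))"
    by (rule real_sqrt_le_mono[OF cs_sum])
  finally show ?thesis by (simp add: real_sqrt_mult)
qed


lemma alpha_lemma2:
  fixes d :: nat and v :: "nat \<Rightarrow> nat \<Rightarrow> int" and vl :: "nat \<Rightarrow> int"
  assumes hd: "d \<ge> 2"
    and hspan: "\<forall>w\<in>ivecs d. \<exists>c::nat\<Rightarrow>int. \<exists>c0::int. \<forall>i<d. w i = (\<Sum>j<d-1. c j * v j i) + c0 * vl i"
    and hind: "\<forall>c :: nat \<Rightarrow> real. (\<forall>i<d-1. (\<Sum>j<d-1. c j * real_of_int (v j i)) = 0) \<longrightarrow> (\<forall>j<d-1. c j = 0)"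
  shows "\<exists>!a. a \<in> pi_d d \<and> (\<forall>j<d-1. Lf d a (v j) = 0)"
    and "\<And>a. a \<in> pi_d d \<Longrightarrow> (\<forall>j<d-1. Lf d a (v j) = 0) \<Longrightarrow>
          \<bar>Lf d a vl\<bar> * sqrt (det (mat (d-1) (d-1) (\<lambda>(i,j). ulinner d (v i) (v j)))) = 1"
proof -
  obtain n where dn: "d = Suc n" using hd by (cases d) auto
  define v' where "v' j = (if j < n then v j else vl)" for j
  have hspan': "\<forall>w\<in>ivecs d. \<exists>c::nat\<Rightarrow>int. \<forall>i<d. w i = (\<Sum>j<d. c j * v' j i)"
  proof
    fix w assume "w \<in> ivecs d"
    then obtain c c0 where cc: "\<forall>i<d. w i = (\<Sum>j<d-1. c j * v j i) + c0 * vl i" using hspan by blast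
    define c' where "c' j = (if j < n then c j else c0)" for j
    have "\<forall>i<d. w i = (\<Sum>j<d. c' j * v' j i)"
      using cc by (simp add: dn c'_def v'_def)
    then show "\<exists>c::nat\<Rightarrow>int. \<forall>i<d. w i = (\<Sum>j<d. c j * v' j i)" by blast
  qed
  have hind': "\<forall>c :: nat \<Rightarrow> real. (\<forall>i<d-1. (\<Sum>j<d-1. c j * real_of_int (v' j i)) = 0) \<longrightarrow> (\<forall>j<d-1. c j = 0)"
    using hind by (simp add: dn v'_def)
  have e1: "(\<forall>j<d-1. Lf d a (v' j) = 0) = (\<forall>j<d-1. Lf d a (v j) = 0)" for a
    by (simp add: dn v'_def)
  have e2: "mat (d-1) (d-1) (\<lambda>(i,j). ulinner d (v' i) (v' j)) = mat (d-1) (d-1) (\<lambda>(i,j). ulinner d (v i) (v j))"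
    by (rule eq_matI) (auto simp: dn v'_def)
  have e3: "v' (d-1) = vl" by (simp add: dn v'_def)
  show "\<exists>!a. a \<in> pi_d d \<and> (\<forall>j<d-1. Lf d a (v j) = 0)"
    using alpha_lemma(1)[OF hd hspan' hind'] e1 by simp
  fix a assume "a \<in> pi_d d" "\<forall>j<d-1. Lf d a (v j) = 0"
  then show "\<bar>Lf d a vl\<bar> * sqrt (det (mat (d-1) (d-1) (\<lambda>(i,j). ulinner d (v i) (v j)))) = 1"
    using alpha_lemma(2)[OF hd hspan' hind', of a] e1 e2 e3 by simp
qed

lemma rnorm_scale: "rnorm d (\<lambda>i. t * f i) = \<bar>t\<bar> * rnorm d f"
proof -
  have "(\<Sum>i<d. (t * f i)\<^sup>2) = t\<^sup>2 * (\<Sum>i<d. (f i)\<^sup>2)"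
    by (simp add: power_mult_distrib sum_distrib_left)
  then show ?thesis by (simp add: rnorm_def real_sqrt_mult)
qed

lemma ball_interior:
  fixes x c :: "nat \<Rightarrow> real"
  assumes c: "c \<in> pi_d d" and R: "R > 0"
    and x: "x \<in> rel_int_pi d {y \<in> pi_d d. rnorm d (\<lambda>i. y i - c i) \<le> R}"
  shows "rnorm d (\<lambda>i. x i - c i) < R"
proof (rule ccontr)
  assume nlt: "\<not> rnorm d (\<lambda>i. x i - c i) < R"
  define \<rho> where "\<rho> = rnorm d (\<lambda>i. x i - c i)"
  from x obtain e where e: "e > 0" and xin: "x \<in> pi_d d" "\<rho> \<le> R"
    and ball: "\<forall>y\<in>pi_d d. rnorm d (\<lambda>i. y i - x i) < e \<longrightarrow> rnorm d (\<lambda>i. y i - c i) \<le> R"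
    unfolding rel_int_pi_def \<rho>_def by auto
  have rhoR: "\<rho> = R" using nlt xin unfolding \<rho>_def by simp
  define s where "s = e / (2 * \<rho>)"
  have s: "s > 0" using e R rhoR by (simp add: s_def)
  define y where "y i = x i + s * (x i - c i)" for i
  have "y \<in> pi_d d" using xin(1) c by (simp add: y_def pi_d_def rvecs_def)
  moreover have "rnorm d (\<lambda>i. y i - x i) < e"
  proof -
    have "rnorm d (\<lambda>i. y i - x i) = s * \<rho>"
      using rnorm_scale[of d s "\<lambda>i. x i - c i"] s by (simp add: y_def \<rho>_def)
    also have "\<dots> = e / 2" using R rhoR by (simp add: s_def)
    finally show ?thesis using e by simp
  qed
  ultimately have "rnorm d (\<lambda>i. y i - c i) \<le> R" using ball by blast
  moreover have "rnorm d (\<lambda>i. y i - c i) = (1 + s) * \<rho>"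
    using rnorm_scale[of d "1 + s" "\<lambda>i. x i - c i"] s
    by (simp add: y_def \<rho>_def algebra_simps)
  ultimately have "R * s \<le> 0" using rhoR by (simp add: algebra_simps)
  moreover have "R * s > 0" using s R by simp
  ultimately show False by simp
qed

lemma Lf_diff:
  assumes d: "d \<ge> 1" and a: "a \<in> pi_d d" and b: "b \<in> pi_d d"
  shows "\<bar>Lf d a w - Lf d b w\<bar> \<le> rnorm d (\<lambda>i. a i - b i) * ulnorm d w"
proof -
  obtain n where dn: "d = Suc n" using d by (cases d) auto
  have an: "a n = 1" "b n = 1" using a b dn by (auto simp: pi_d_def)
  have "Lf d a w - Lf d b w = (\<Sum>i<n. (a i - b i) * real_of_int (w i))"
    using an by (simp add: Lf_def dn sum_subtractf[symmetric] left_diff_distrib)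
  then have "\<bar>Lf d a w - Lf d b w\<bar> \<le> sqrt (\<Sum>i<n. (a i - b i)\<^sup>2) * sqrt (\<Sum>i<n. (real_of_int (w i))\<^sup>2)"
    using cs_abs[of "\<lambda>i. a i - b i" "\<lambda>i. real_of_int (w i)" "{..<n}"] by simp
  also have "sqrt (\<Sum>i<n. (a i - b i)\<^sup>2) = rnorm d (\<lambda>i. a i - b i)"
    using an by (simp add: rnorm_def dn)
  also have "sqrt (\<Sum>i<n. (real_of_int (w i))\<^sup>2) = ulnorm d w"
    by (simp add: ulnorm_def dn)
  finally show ?thesis .
qed

lemma Lf_lin:
  assumes "\<forall>i<d. w i = (\<Sum>j\<in>J. c j * v j i)"
  shows "Lf d a w = (\<Sum>j\<in>J. real_of_int (c j) * Lf d a (v j))"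
proof -
  have "Lf d a w = (\<Sum>i<d. \<Sum>j\<in>J. a i * (real_of_int (c j) * real_of_int (v j i)))"
    unfolding Lf_def using assms by (intro sum.cong) (auto simp: sum_distrib_left)
  also have "\<dots> = (\<Sum>j\<in>J. \<Sum>i<d. a i * (real_of_int (c j) * real_of_int (v j i)))"
    by (rule sum.swap)
  also have "\<dots> = (\<Sum>j\<in>J. real_of_int (c j) * Lf d a (v j))"
    by (simp add: Lf_def sum_distrib_left mult_ac)
  finally show ?thesis .
qed

lemma detL_gram: "detL d z k l = sqrt (gram (d-1) (\<lambda>i t. real_of_int (z (k+i) t)) l)"
  by (simp add: detL_def gram_def ulinner_def)


lemma det2: "det (mat 2 2 f) = f (0,0) * f (1,1) - f (1,0) * (f (0,1) :: real)"
proof -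
  have "det (mat 2 2 f) = (\<Sum>i<2. mat 2 2 f $$ (i,0) * cofactor (mat 2 2 f) i 0)"
    by (rule laplace_expansion_column) auto
  also have "\<dots> = f (0,0) * cofactor (mat 2 2 f) 0 0 + f (1,0) * cofactor (mat 2 2 f) 1 0"
    by (simp add: numeral_2_eq_2)
  also have "cofactor (mat 2 2 f) 0 0 = f (1,1)"
  proof -
    have "mat_delete (mat 2 2 f) 0 0 \<in> carrier_mat 1 1" by (simp add: mat_delete_def)
    then show ?thesis by (simp add: cofactor_def det_single mat_delete_def)
  qed
  also have "cofactor (mat 2 2 f) 1 0 = - f (0,1)"
  proof -
    have "mat_delete (mat 2 2 f) 1 0 \<in> carrier_mat 1 1" by (simp add: mat_delete_def)
    then show ?thesis by (simp add: cofactor_def det_single mat_delete_def)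
  qed
  finally show ?thesis by simp
qed

lemma gram1: "gram m u 1 = (\<Sum>t<m. (u 0 t)\<^sup>2)"
  by (simp add: gram_def det_single power2_eq_square)

lemma gram2: "gram m u 2 = (\<Sum>t<m. (u 0 t)\<^sup>2) * (\<Sum>t<m. (u 1 t)\<^sup>2) - (\<Sum>t<m. u 0 t * u 1 t)\<^sup>2"
  by (simp add: gram_def det2 power2_eq_square mult.commute)

lemma highcoef:
  fixes d k :: nat and z :: "nat \<Rightarrow> nat \<Rightarrow> int" and c :: "nat \<Rightarrow> int" and w :: "nat \<Rightarrow> int"
  assumes hd: "d \<ge> 3"
    and hdet: "\<forall>n. 3 \<le> n \<and> n \<le> d-1 \<longrightarrow>
                 detL d z (k+1) n > ulnorm d (z (k+2)) * detL d z (k+1) (n-1)"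
    and hwd1: "ul_indep d z (k+1)"
    and hw: "\<forall>i<d-1. w i = (\<Sum>j\<in>{1..d-1}. c j * z (k+j) i)"
    and hn: "ulnorm d w \<le> ulnorm d (z (k+2))"
  shows "\<forall>j. 3 \<le> j \<and> j \<le> d-1 \<longrightarrow> c j = 0"
proof (rule ccontr)
  assume nt: "\<not> (\<forall>j. 3 \<le> j \<and> j \<le> d-1 \<longrightarrow> c j = 0)"
  define S where "S = {j. 3 \<le> j \<and> j \<le> d-1 \<and> c j \<noteq> 0}"
  have Sne: "S \<noteq> {}" using nt by (auto simp: S_def)
  have Sfin: "finite S" by (rule finite_subset[of _ "{..d-1}"]) (auto simp: S_def)
  define N where "N = Max S"
  have NS: "N \<in> S" using Sne Sfin by (simp add: N_def)
  have Nmax: "\<And>j. j \<in> S \<Longrightarrow> j \<le> N" using Sfin by (simp add: N_def)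
  have N3: "3 \<le> N" "N \<le> d-1" "c N \<noteq> 0" using NS by (auto simp: S_def)
  have above: "c j = 0" if "N < j" "j \<le> d-1" for j
  proof (rule ccontr)
    assume "c j \<noteq> 0"
    then have "j \<in> S" using that N3 by (auto simp: S_def)
    then show False using Nmax[of j] that by simp
  qed
  define m where "m = d - 1"
  define u where "u i t = real_of_int (z (k+1+i) t)" for i t
  have u_eq: "u = (\<lambda>i t. real_of_int (z (k+1+i) t))" by (simp add: u_def fun_eq_iff)
  obtain n0 where n0: "N = Suc n0" using N3 by (cases N) auto
  have indep_all: "\<forall>x. (\<forall>t<m. (\<Sum>i<m. x i * u i t) = 0) \<longrightarrow> (\<forall>i<m. x i = 0)"
    using hwd1 by (simp add: ul_indep_def m_def u_def)
  have indepN: "\<forall>x. (\<forall>t<m. (\<Sum>i<Suc n0. x i * u i t) = 0) \<longrightarrow> (\<forall>i<Suc n0. x i = 0)"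
    using indep_mono[OF indep_all, of "Suc n0"] N3 n0 by (simp add: m_def)
  define cc where "cc i = real_of_int (c (i+1))" for i
  have wt: "real_of_int (w t) = (\<Sum>i<Suc n0. cc i * u i t)" if t: "t < m" for t
  proof -
    have "w t = (\<Sum>j\<in>{1..d-1}. c j * z (k+j) t)" using hw t by (simp add: m_def)
    also have "\<dots> = (\<Sum>j\<in>{1..N} \<union> {N<..d-1}. c j * z (k+j) t)"
      using N3 by (intro sum.cong) auto
    also have "\<dots> = (\<Sum>j\<in>{1..N}. c j * z (k+j) t) + (\<Sum>j\<in>{N<..d-1}. c j * z (k+j) t)"
      by (rule sum.union_disjoint) auto
    also have "(\<Sum>j\<in>{N<..d-1}. c j * z (k+j) t) = 0" using above by simp
    also have "(\<Sum>j\<in>{1..N}. c j * z (k+j) t) = (\<Sum>i<Suc n0. c (i+1) * z (k+1+i) t)"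
    proof -
      have "(\<Sum>j\<in>{Suc 0..Suc n0}. c j * z (k+j) t) = (\<Sum>i\<in>{0..n0}. c (Suc i) * z (k + Suc i) t)"
        by (subst sum.atLeast_Suc_atMost_Suc_shift) (simp add: comp_def)
      then show ?thesis using n0 by (simp add: atLeast0AtMost lessThan_Suc_atMost)
    qed
    finally show ?thesis by (simp add: cc_def u_def)
  qed
  have proj: "(cc n0)\<^sup>2 * gram m u (Suc n0) \<le> gram m u n0 * (\<Sum>t<m. (\<Sum>i<Suc n0. cc i * u i t)\<^sup>2)"
    by (rule gram_proj[OF indepN])
  have "(\<Sum>t<m. (\<Sum>i<Suc n0. cc i * u i t)\<^sup>2) = (ulnorm d w)\<^sup>2"
    using wt by (simp add: ulnorm_def m_def sum_nonneg)
  then have proj2: "(cc n0)\<^sup>2 * gram m u N \<le> gram m u n0 * (ulnorm d w)\<^sup>2"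
    using proj n0 by simp
  have gN: "gram m u N > 0" and gn0: "gram m u n0 > 0"
    using gram_pos[OF indep_all] N3 n0 by (auto simp: m_def)
  have c1: "(cc n0)\<^sup>2 \<ge> 1"
  proof -
    have "\<bar>c N\<bar> \<ge> 1" using N3 by simp
    then have "real_of_int \<bar>c N\<bar> \<ge> 1" by linarith
    then have "\<bar>cc n0\<bar> \<ge> 1" using n0 by (simp add: cc_def)
    then show ?thesis using abs_le_square_iff[of 1 "cc n0"] by simp
  qed
  have "detL d z (k+1) N > ulnorm d (z (k+2)) * detL d z (k+1) (N-1)" using hdet N3 by blast
  then have "sqrt (gram m u N) > ulnorm d (z (k+2)) * sqrt (gram m u n0)"
    using n0 by (simp add: detL_gram m_def u_eq)
  then have "(sqrt (gram m u N))\<^sup>2 > (ulnorm d (z (k+2)) * sqrt (gram m u n0))\<^sup>2"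
    by (rule power_strict_mono) (use gn0 in \<open>auto simp: ulnorm_def sum_nonneg\<close>)
  then have gt: "gram m u N > (ulnorm d (z (k+2)))\<^sup>2 * gram m u n0"
    using gN gn0 by (simp add: power_mult_distrib)
  have "(ulnorm d (z (k+2)))\<^sup>2 * gram m u n0 < gram m u n0 * (ulnorm d w)\<^sup>2"
    proof -
    have "gram m u N \<le> (cc n0)\<^sup>2 * gram m u N" using c1 gN by (simp add: mult_le_cancel_right1)
    then show ?thesis using gt proj2 by linarith
  qed
  then have "(ulnorm d (z (k+2)))\<^sup>2 < (ulnorm d w)\<^sup>2" using gn0 by (simp add: mult.commute)
  then have "ulnorm d (z (k+2)) < ulnorm d w"
    by (rule power2_less_imp_less) (simp add: ulnorm_def sum_nonneg)
  then show False using hn by simp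
qed


lemma sum_shift1: "(\<Sum>j\<in>{1..n}. f j) = (\<Sum>j<n. f (Suc j))"
  by (induction n) (simp_all add: atLeastAtMostSuc_conv add.commute)

lemma Lf_comb2: "Lf d a (\<lambda>i. x * f i + y * g i) = real_of_int x * Lf d a f + real_of_int y * Lf d a g"
  by (simp add: Lf_def sum.distrib sum_distrib_left algebra_simps)

lemma ulnorm_sq: "(ulnorm d w)\<^sup>2 = (\<Sum>i<d-1. (real_of_int (w i))\<^sup>2)"
  by (simp add: ulnorm_def sum_nonneg)

lemma ulnorm_comb2: "(ulnorm d (\<lambda>i. x * f i + y * g i))\<^sup>2 =
   (real_of_int x)\<^sup>2 * (ulnorm d f)\<^sup>2 + 2 * real_of_int x * real_of_int y * ulinner d f g + (real_of_int y)\<^sup>2 * (ulnorm d g)\<^sup>2"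
proof -
  have "(ulnorm d (\<lambda>i. x * f i + y * g i))\<^sup>2 = (\<Sum>i<d-1. (real_of_int x)\<^sup>2 * (real_of_int (f i))\<^sup>2
      + 2 * real_of_int x * real_of_int y * (real_of_int (f i) * real_of_int (g i)) + (real_of_int y)\<^sup>2 * (real_of_int (g i))\<^sup>2)"
    unfolding ulnorm_sq by (rule sum.cong) (simp_all add: power2_sum power_mult_distrib mult_ac)
  also have "\<dots> = (real_of_int x)\<^sup>2 * (\<Sum>i<d-1. (real_of_int (f i))\<^sup>2) + 2 * real_of_int x * real_of_int y * ulinner d f g + (real_of_int y)\<^sup>2 * (\<Sum>i<d-1. (real_of_int (g i))\<^sup>2)"
    by (simp add: sum.distrib sum_distrib_left ulinner_def)
  finally show ?thesis by (simp add: ulnorm_sq)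
qed

lemma ulnorm_nonneg: "ulnorm d w \<ge> 0" by (simp add: ulnorm_def sum_nonneg)
lemma rnorm_nonneg: "rnorm d w \<ge> 0" by (simp add: rnorm_def sum_nonneg)


theorem lemma4:
  fixes d k :: nat and z :: "nat \<Rightarrow> nat \<Rightarrow> int" and \<alpha> :: "nat \<Rightarrow> real"
  assumes hd: "d \<ge> 3"
    and hz: "\<forall>n. z n \<in> ivecs d"
    and hbasis: "is_Zbasis d z k"
    and hle12: "ulnorm d (z (k+1)) \<le> ulnorm d (z (k+2))"
    and hle23: "ulnorm d (z (k+2)) \<le> ulnorm d (z (k+3))"
    and hinner: "ulinner d (z (k+1)) (z (k+2)) \<le> 0"
    and hdet: "\<forall>n. 3 \<le> n \<and> n \<le> d-1 \<longrightarrow>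
                 detL d z (k+1) n > ulnorm d (z (k+2)) * detL d z (k+1) (n-1)"
    and hwd1: "ul_indep d z (k+1)"
    and hwd2: "ul_indep d z (k+2)"
    and h\<alpha>: "\<alpha> \<in> Sq d z (k+1) \<inter> rel_int_pi d (Sq d z (k+2))"
    and hsign: "Lf d \<alpha> (z (k+2)) * Lf d (alphaq d z (k+2)) (z (k+1)) \<ge> 0"
  shows "(\<forall>w\<in>ivecs d. ulnorm d w \<le> ulnorm d (z (k+2)) \<and> w \<noteq> (\<lambda>i. 0) \<and>
            w \<noteq> z (k+2) \<and> w \<noteq> (\<lambda>i. - z (k+2) i) \<longrightarrow>
            \<bar>Lf d \<alpha> w\<bar> \<ge> \<bar>Lf d \<alpha> (z (k+1))\<bar>)
       \<and> \<bar>Lf d \<alpha> (z (k+1))\<bar> > \<bar>Lf d \<alpha> (z (k+2))\<bar>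
       \<and> 1 / (2 * Dq d z (k+2) (d-1) * Bq d z (k+1) ^ (d-1))
           \<le> \<bar>Lf d \<alpha> (z (k+1))\<bar> * ulnorm d (z (k+1)) ^ (d-1)
       \<and> \<bar>Lf d \<alpha> (z (k+1))\<bar> * ulnorm d (z (k+1)) ^ (d-1)
           \<le> 3 / (2 * Dq d z (k+2) (d-1) * Bq d z (k+1) ^ (d-1))
       \<and> (\<forall>w\<in>ivecs d. (\<not> (\<exists>t::int. w = (\<lambda>i. t * z (k+1) i))) \<and>
            w \<noteq> z (k+2) \<and> w \<noteq> (\<lambda>i. - z (k+2) i) \<and>
            ulnorm d (z (k+1)) \<le> ulnorm d w \<and> ulnorm d w \<le> ulnorm d (z (k+2)) \<longrightarrow>
            \<bar>Lf d \<alpha> w\<bar> * ulnorm d w ^ (d-1) \<ge>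
              min (1 / (2 * Dq d z (k+1) (d-1)))
                  (Dq d z (k+1) 2 ^ (d-1) / (2 * Dq d z (k+2) (d-1) * Bq d z (k+1) ^ (d-1))))"
proof -
  obtain m where dm: "d = Suc m" and m2: "m \<ge> 2" using hd by (cases d) auto
  have dm1: "d - 1 = m" using dm by simp
  define n1 where "n1 = ulnorm d (z (k+1))"
  define n2 where "n2 = ulnorm d (z (k+2))"
  define n3 where "n3 = ulnorm d (z (k+3))"
  define e1 where "e1 = Lf d \<alpha> (z (k+1))"
  define e2 where "e2 = Lf d \<alpha> (z (k+2))"
  define a1 where "a1 = alphaq d z (k+1)"
  define a2 where "a2 = alphaq d z (k+2)"
  define g1 where "g1 = detL d z (k+1) (d-1)"
  define g2 where "g2 = detL d z (k+2) (d-1)"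
  define s0 where "s0 = Lf d a2 (z (k+1))"
  define p where "p = ulinner d (z (k+1)) (z (k+2))"
  define h where "h = detL d z (k+1) 2"
  have hdec: "\<And>w. w \<in> ivecs d \<Longrightarrow> \<exists>c::nat\<Rightarrow>int. \<forall>i<d. w i = (\<Sum>j\<in>{1..d}. c j * z (k+j) i)"
  proof -
    fix w assume w: "w \<in> ivecs d"
    have "\<forall>w\<in>ivecs d. \<exists>!c. (\<forall>j. j \<notin> {1..d} \<longrightarrow> c j = 0) \<and>
        (\<forall>i<d. w i = (\<Sum>j=1..d. c j * z (k+j) i))"
      using hbasis unfolding is_Zbasis_def by (rule conjunct2)
    then have "\<exists>!c. (\<forall>j. j \<notin> {1..d} \<longrightarrow> c j = 0) \<and> (\<forall>i<d. w i = (\<Sum>j=1..d. c j * z (k+j) i))"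
      using w by (rule bspec)
    then obtain c where "(\<forall>j. j \<notin> {1..d} \<longrightarrow> c j = 0) \<and> (\<forall>i<d. w i = (\<Sum>j=1..d. c j * z (k+j) i))"
      by (rule ex1E)
    then show "\<exists>c::nat\<Rightarrow>int. \<forall>i<d. w i = (\<Sum>j\<in>{1..d}. c j * z (k+j) i)" by blast
  qed
  have hsp1: "\<forall>w\<in>ivecs d. \<exists>c::nat\<Rightarrow>int. \<exists>c0::int. \<forall>i<d. w i = (\<Sum>j<d-1. c j * z (k+1+j) i) + c0 * z (k+d) i"
  proof
    fix w assume "w \<in> ivecs d"
    then obtain c where c: "\<forall>i<d. w i = (\<Sum>j\<in>{1..d}. c j * z (k+j) i)" using hdec by blast
    have "\<forall>i<d. w i = (\<Sum>j<d-1. c (Suc j) * z (k+1+j) i) + c d * z (k+d) i"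
      using c unfolding sum_shift1 by (simp add: dm)
    then show "\<exists>c::nat\<Rightarrow>int. \<exists>c0::int. \<forall>i<d. w i = (\<Sum>j<d-1. c j * z (k+1+j) i) + c0 * z (k+d) i"
      by (intro exI[of _ "\<lambda>j. c (Suc j)"] exI[of _ "c d"])
  qed
  have hsp2: "\<forall>w\<in>ivecs d. \<exists>c::nat\<Rightarrow>int. \<exists>c0::int. \<forall>i<d. w i = (\<Sum>j<d-1. c j * z (k+2+j) i) + c0 * z (k+1) i"
  proof
    fix w assume "w \<in> ivecs d"
    then obtain c where c: "\<forall>i<d. w i = (\<Sum>j\<in>{1..d}. c j * z (k+j) i)" using hdec by blast
    have "\<forall>i<d. w i = (\<Sum>j<d-1. c (Suc (Suc j)) * z (k+2+j) i) + c 1 * z (k+1) i"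
      using c unfolding sum_shift1 dm sum.lessThan_Suc_shift by (simp add: add_ac)
    then show "\<exists>c::nat\<Rightarrow>int. \<exists>c0::int. \<forall>i<d. w i = (\<Sum>j<d-1. c j * z (k+2+j) i) + c0 * z (k+1) i"
      by (intro exI[of _ "\<lambda>j. c (Suc (Suc j))"] exI[of _ "c 1"])
  qed
  have d2: "d \<ge> 2" using hd by simp
  note AL1 = alpha_lemma2[of d "\<lambda>j. z (k+1+j)" "z (k+d)", OF d2 hsp1 hwd1[unfolded ul_indep_def]]
  note AL2 = alpha_lemma2[of d "\<lambda>j. z (k+2+j)" "z (k+1)", OF d2 hsp2 hwd2[unfolded ul_indep_def]]
  have a1P: "a1 \<in> pi_d d \<and> (\<forall>j<d-1. Lf d a1 (z (k+1+j)) = 0)"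
    unfolding a1_def alphaq_def using theI'[OF AL1(1)] by simp
  have a2P: "a2 \<in> pi_d d \<and> (\<forall>j<d-1. Lf d a2 (z (k+2+j)) = 0)"
    unfolding a2_def alphaq_def using theI'[OF AL2(1)] by simp
  have g1P: "\<bar>Lf d a1 (z (k+d))\<bar> * g1 = 1"
    using AL1(2)[of a1] a1P unfolding g1_def detL_def by simp
  have g2P: "\<bar>s0\<bar> * g2 = 1"
    using AL2(2)[of a2] a2P unfolding g2_def s0_def detL_def by simp
  have g1pos: "g1 > 0"
  proof (rule ccontr)
    assume "\<not> g1 > 0"
    then have "g1 \<le> 0" by simp
    then show False using g1P by (smt (verit) abs_ge_zero mult_nonneg_nonpos)
  qed
  have g2pos: "g2 > 0"
  proof (rule ccontr)
    assume "\<not> g2 > 0"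
    then have "g2 \<le> 0" by simp
    then show False using g2P by (smt (verit) abs_ge_zero mult_nonneg_nonpos)
  qed
  have a1pi: "a1 \<in> pi_d d" and a1z: "\<And>j::nat. j < d-1 \<Longrightarrow> Lf d a1 (z (k+1+j)) = 0" using a1P by auto
  have a2pi: "a2 \<in> pi_d d" and a2z: "\<And>j::nat. j < d-1 \<Longrightarrow> Lf d a2 (z (k+2+j)) = 0" using a2P by auto
  have L1z1: "Lf d a1 (z (k+1)) = 0" using a1z[of 0] dm m2 by simp
  have L2z2: "Lf d a2 (z (k+2)) = 0" using a2z[of 0] dm m2 by simp
  have absA1: "\<bar>Lf d a1 (z (k+d))\<bar> = 1/g1" using g1P g1pos by (simp add: field_simps)
  have abss0: "\<bar>s0\<bar> = 1/g2" using g2P g2pos by (simp add: field_simps)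
  have n1pos: "n1 > 0"
  proof (rule ccontr)
    assume "\<not> n1 > 0"
    then have "n1 = 0" using ulnorm_nonneg[of d "z (k+1)"] by (simp add: n1_def)
    then have "(\<Sum>i<d-1. (real_of_int (z (k+1) i))\<^sup>2) = 0" using ulnorm_sq[of d "z (k+1)"] by (simp add: n1_def)
    then have z0: "\<forall>i<d-1. z (k+1) i = 0" by (simp add: sum_nonneg_eq_0_iff)
    define cz where "cz j = (if j = 0 then 1 else (0::real))" for j :: nat
    have "\<forall>i<d-1. (\<Sum>j<d-1. cz j * real_of_int (z (k+1+j) i)) = 0"
      using z0 dm m2 by (simp add: cz_def if_distrib[of "\<lambda>x. x * _"] cong: if_cong)
    then have "\<forall>j<d-1. cz j = 0" using hwd1 unfolding ul_indep_def by blast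
    then show False using dm m2 by (auto simp: cz_def dest!: spec[of _ 0])
  qed
  have n12: "n1 \<le> n2" using hle12 by (simp add: n1_def n2_def)
  have n23: "n2 \<le> n3" using hle23 by (simp add: n2_def n3_def)
  have n2pos: "n2 > 0" and n3pos: "n3 > 0" using n1pos n12 n23 by auto
  have \<alpha>pi: "\<alpha> \<in> pi_d d" using h\<alpha> by (simp add: Sq_def)
  have R1eq: "Rq d z (k+1) = 1 / (2 * n2 * g1)" by (simp add: Rq_def n2_def g1_def)
  have R2eq: "Rq d z (k+2) = 1 / (2 * n3 * g2)" by (simp add: Rq_def n3_def g2_def numeral_3_eq_3)
  define \<rho>1 where "\<rho>1 = rnorm d (\<lambda>i. \<alpha> i - a1 i)"
  define \<rho>2 where "\<rho>2 = rnorm d (\<lambda>i. \<alpha> i - a2 i)"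
  have \<rho>1le: "\<rho>1 \<le> 1 / (2 * n2 * g1)" using h\<alpha> R1eq by (simp add: Sq_def \<rho>1_def a1_def)
  have \<rho>2lt: "\<rho>2 < 1 / (2 * n3 * g2)"
  proof -
    have "\<alpha> \<in> rel_int_pi d {y \<in> pi_d d. rnorm d (\<lambda>i. y i - a2 i) \<le> Rq d z (k+2)}"
      using h\<alpha> by (simp add: Sq_def a2_def)
    moreover have Rp: "Rq d z (k+2) > 0" unfolding R2eq using n3pos g2pos by simp
    ultimately have "rnorm d (\<lambda>i. \<alpha> i - a2 i) < Rq d z (k+2)"
      using ball_interior[OF a2pi Rp] by blast
    then show ?thesis using R2eq by (simp add: \<rho>2_def)
  qed
  have \<rho>1nn: "\<rho>1 \<ge> 0" and \<rho>2nn: "\<rho>2 \<ge> 0" by (simp_all add: \<rho>1_def \<rho>2_def rnorm_nonneg)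
  have d1: "d \<ge> 1" using hd by simp
  have B1: "\<And>w. \<bar>Lf d \<alpha> w - Lf d a1 w\<bar> \<le> \<rho>1 * ulnorm d w"
    using Lf_diff[OF d1 \<alpha>pi a1pi] by (simp add: \<rho>1_def)
  have B2: "\<And>w. \<bar>Lf d \<alpha> w - Lf d a2 w\<bar> \<le> \<rho>2 * ulnorm d w"
    using Lf_diff[OF d1 \<alpha>pi a2pi] by (simp add: \<rho>2_def)
  have r1n2: "\<rho>1 * n2 \<le> 1 / (2 * g1)"
  proof -
    have "\<rho>1 * n2 \<le> 1 / (2 * n2 * g1) * n2" by (rule mult_right_mono[OF \<rho>1le]) (use n2pos in simp)
    also have "1 / (2 * n2 * g1) * n2 = 1 / (2 * g1)" using n2pos by simp
    finally show ?thesis .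
  qed
  have e1le: "\<bar>e1\<bar> \<le> 1 / (2 * g1)"
  proof -
    have "\<bar>e1\<bar> \<le> \<rho>1 * n1" using B1[of "z (k+1)"] L1z1 by (simp add: e1_def n1_def)
    also have "\<dots> \<le> \<rho>1 * n2" using n12 \<rho>1nn by (simp add: mult_left_mono)
    finally show ?thesis using r1n2 by simp
  qed
  have r2n3: "\<rho>2 * n3 < 1 / (2 * g2)"
  proof -
    have "\<rho>2 * n3 < 1 / (2 * n3 * g2) * n3" by (rule mult_strict_right_mono[OF \<rho>2lt]) (use n3pos in simp)
    also have "1 / (2 * n3 * g2) * n3 = 1 / (2 * g2)" using n3pos by simp
    finally show ?thesis .
  qed
  have r2n1: "\<rho>2 * n1 < 1 / (2 * g2)"
    using r2n3 n12 n23 \<rho>2nn by (smt (verit) mult_left_mono)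
  have r2n2: "\<rho>2 * n2 < 1 / (2 * g2)"
    using r2n3 n23 \<rho>2nn by (smt (verit) mult_left_mono)
  have e1s0: "\<bar>e1 - s0\<bar> \<le> \<rho>2 * n1" using B2[of "z (k+1)"] by (simp add: e1_def s0_def n1_def)
  have e2le: "\<bar>e2\<bar> \<le> \<rho>2 * n2" using B2[of "z (k+2)"] L2z2 by (simp add: e2_def n2_def)
  have e1lo: "\<bar>e1\<bar> \<ge> 1 / (2 * g2)" using e1s0 abss0 r2n1 by linarith
  have e1hi: "\<bar>e1\<bar> \<le> 3 / (2 * g2)" using e1s0 abss0 r2n1 by linarith
  have e12: "\<bar>e1\<bar> > \<bar>e2\<bar>" using e1lo e2le r2n2 by linarith
  have sgn: "e1 * s0 > 0"
  proof -
    have "1 / (2 * g2) < 1 / g2" using g2pos by (simp add: field_simps)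
    then have "\<bar>e1 - s0\<bar> < \<bar>s0\<bar>" using e1s0 r2n1 abss0 by linarith
    then show ?thesis by (smt (verit) mult_neg_neg mult_pos_pos)
  qed
  have Bq_eq: "Bq d z (k+1) = n2 / n1" by (simp add: Bq_def n1_def n2_def)
  have D2_eq: "Dq d z (k+2) (d-1) = g2 / n2 ^ (d-1)" by (simp add: Dq_def g2_def n2_def)
  have D1_eq: "Dq d z (k+1) (d-1) = g1 / n1 ^ (d-1)" by (simp add: Dq_def g1_def n1_def)
  have D12_eq: "Dq d z (k+1) 2 = h / n1 ^ 2" by (simp add: Dq_def h_def n1_def)
  have T0: "1 / (2 * Dq d z (k+2) (d-1) * Bq d z (k+1) ^ (d-1)) = n1 ^ (d-1) / (2 * g2)"
    unfolding Bq_eq D2_eq using n1pos n2pos g2pos by (simp add: power_divide field_simps)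
  have T3: "3 / (2 * Dq d z (k+2) (d-1) * Bq d z (k+1) ^ (d-1)) = 3 * n1 ^ (d-1) / (2 * g2)"
    unfolding Bq_eq D2_eq using n1pos n2pos g2pos by (simp add: power_divide field_simps)
  have T1: "1 / (2 * Dq d z (k+1) (d-1)) = n1 ^ (d-1) / (2 * g1)"
    unfolding D1_eq using n1pos g1pos by (simp add: field_simps)
  have T2: "Dq d z (k+1) 2 ^ (d-1) / (2 * Dq d z (k+2) (d-1) * Bq d z (k+1) ^ (d-1)) = (h / n1) ^ (d-1) / (2 * g2)"
  proof -
    have "(n1 ^ 2) ^ (d-1) = n1 ^ (d-1) * n1 ^ (d-1)"
      by (simp add: power2_eq_square power_mult_distrib)
    then show ?thesis
      unfolding Bq_eq D2_eq D12_eq using n1pos n2pos g2pos by (simp add: power_divide field_simps)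
  qed
  have Pii1: "1 / (2 * Dq d z (k+2) (d-1) * Bq d z (k+1) ^ (d-1)) \<le> \<bar>Lf d \<alpha> (z (k+1))\<bar> * ulnorm d (z (k+1)) ^ (d-1)"
  proof -
    have "n1 ^ (d-1) / (2 * g2) = 1 / (2 * g2) * n1 ^ (d-1)" by simp
    also have "\<dots> \<le> \<bar>e1\<bar> * n1 ^ (d-1)" by (rule mult_right_mono[OF e1lo]) (use n1pos in simp)
    finally show ?thesis using T0 by (simp add: e1_def n1_def)
  qed
  have Pii2: "\<bar>Lf d \<alpha> (z (k+1))\<bar> * ulnorm d (z (k+1)) ^ (d-1) \<le> 3 / (2 * Dq d z (k+2) (d-1) * Bq d z (k+1) ^ (d-1))"
  proof -
    have "\<bar>e1\<bar> * n1 ^ (d-1) \<le> 3 / (2 * g2) * n1 ^ (d-1)" by (rule mult_right_mono[OF e1hi]) (use n1pos in simp)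
    also have "\<dots> = 3 * n1 ^ (d-1) / (2 * g2)" by simp
    finally show ?thesis using T3 by (simp add: e1_def n1_def)
  qed
  have Pi2: "\<bar>Lf d \<alpha> (z (k+1))\<bar> > \<bar>Lf d \<alpha> (z (k+2))\<bar>" using e12 by (simp add: e1_def e2_def)
  have zvec: "\<And>n i. d \<le> i \<Longrightarrow> z n i = 0" using hz by (simp add: ivecs_def)
  have CD: "\<And>w. w \<in> ivecs d \<Longrightarrow> ulnorm d w \<le> n2 \<Longrightarrow>
      \<bar>Lf d \<alpha> w\<bar> \<ge> 1 / (2 * g1) \<or> (\<exists>x y. w = (\<lambda>i. x * z (k+1) i + y * z (k+2) i))"
  proof -
    fix w assume w: "w \<in> ivecs d" and wn: "ulnorm d w \<le> n2"
    obtain c where c: "\<forall>i<d. w i = (\<Sum>j\<in>{1..d}. c j * z (k+j) i)" using hdec[OF w] by blast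
    have split: "\<And>f::nat \<Rightarrow> real. (\<Sum>j\<in>{1..d}. f j) = (\<Sum>j\<in>{1..d-1}. f j) + f d"
      using dm by simp
    have splitI: "\<And>f::nat \<Rightarrow> int. (\<Sum>j\<in>{1..d}. f j) = (\<Sum>j\<in>{1..d-1}. f j) + f d"
      using dm by simp
    show "\<bar>Lf d \<alpha> w\<bar> \<ge> 1 / (2 * g1) \<or> (\<exists>x y. w = (\<lambda>i. x * z (k+1) i + y * z (k+2) i))"
    proof (cases "c d = 0")
      case False
      have "Lf d a1 w = (\<Sum>j\<in>{1..d}. real_of_int (c j) * Lf d a1 (z (k+j)))"
        by (rule Lf_lin[where J="{1..d}" and c=c and v="\<lambda>j. z (k+j)"]) (use c in simp)
      also have "\<dots> = (\<Sum>j\<in>{1..d-1}. real_of_int (c j) * Lf d a1 (z (k+j))) + real_of_int (c d) * Lf d a1 (z (k+d))"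
        by (rule split)
      also have "(\<Sum>j\<in>{1..d-1}. real_of_int (c j) * Lf d a1 (z (k+j))) = 0"
      proof (rule sum.neutral, rule ballI)
        fix j assume j: "j \<in> {1..d-1}"
        then have "j - 1 < d - 1" using hd by auto
        then have "Lf d a1 (z (k+1+(j-1))) = 0" by (rule a1z)
        moreover have "k+1+(j-1) = k+j" using j by simp
        ultimately show "real_of_int (c j) * Lf d a1 (z (k+j)) = 0" by simp
      qed
      finally have La1: "Lf d a1 w = real_of_int (c d) * Lf d a1 (z (k+d))" by simp
      have "\<bar>c d\<bar> \<ge> 1" using False by simp
      then have "\<bar>real_of_int (c d)\<bar> \<ge> 1" by linarith
      then have "1 * (1 / g1) \<le> \<bar>real_of_int (c d)\<bar> * (1 / g1)"
        by (rule mult_right_mono) (use g1pos in simp)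
      then have "\<bar>Lf d a1 w\<bar> \<ge> 1 / g1" using La1 absA1 by (simp add: abs_mult)
      moreover have "\<bar>Lf d \<alpha> w - Lf d a1 w\<bar> \<le> \<rho>1 * n2"
        using B1[of w] mult_left_mono[OF wn \<rho>1nn] by linarith
      moreover have "1 / g1 - 1 / (2 * g1) = 1 / (2 * g1)" by (simp add: field_simps)
      ultimately have "\<bar>Lf d \<alpha> w\<bar> \<ge> 1 / (2 * g1)" using r1n2 by linarith
      then show ?thesis by blast
    next
      case True
      have cw: "\<forall>i<d-1. w i = (\<Sum>j\<in>{1..d-1}. c j * z (k+j) i)"
        using c True splitI by simp
      have hc: "\<forall>j. 3 \<le> j \<and> j \<le> d-1 \<longrightarrow> c j = 0"
        by (rule highcoef[OF hd hdet hwd1 cw]) (use wn in \<open>simp add: n2_def\<close>)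
      have "\<forall>i<d. w i = c 1 * z (k+1) i + c 2 * z (k+2) i"
      proof (intro allI impI)
        fix i assume i: "i < d"
        have "{1..d} = {1..2} \<union> {3..d}" using hd by auto
        then have "(\<Sum>j\<in>{1..d}. c j * z (k+j) i) = (\<Sum>j\<in>{1..2}. c j * z (k+j) i) + (\<Sum>j\<in>{3..d}. c j * z (k+j) i)"
          by (simp add: sum.union_disjoint)
        also have "(\<Sum>j\<in>{3..d}. c j * z (k+j) i) = 0"
        proof (rule sum.neutral, rule ballI)
          fix j assume j: "j \<in> {3..d}"
          then have "c j = 0" using hc True by (cases "j = d") auto
          then show "c j * z (k+j) i = 0" by simp
        qed
        also have "{1..2::nat} = {1,2}" by auto
        finally show "w i = c 1 * z (k+1) i + c 2 * z (k+2) i" using c i by simp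
      qed
      then have "w = (\<lambda>i. c 1 * z (k+1) i + c 2 * z (k+2) i)"
      proof (intro ext)
        fix i assume all: "\<forall>i<d. w i = c 1 * z (k+1) i + c 2 * z (k+2) i"
        show "w i = c 1 * z (k+1) i + c 2 * z (k+2) i"
        proof (cases "i < d")
          case True then show ?thesis using all by simp
        next
          case False then show ?thesis using w zvec[of i] by (simp add: ivecs_def)
        qed
      qed
      then show ?thesis by blast
    qed
  qed
  define u where "u i t = real_of_int (z (k+1+i) t)" for i t
  have u_eq: "u = (\<lambda>i t. real_of_int (z (k+1+i) t))" by (simp add: u_def fun_eq_iff)
  have indep_all: "\<forall>x. (\<forall>t<d-1. (\<Sum>i<d-1. x i * u i t) = 0) \<longrightarrow> (\<forall>i<d-1. x i = 0)"
    using hwd1 by (simp add: ul_indep_def u_def)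
  have G2pos: "gram (d-1) u 2 > 0" using gram_pos[OF indep_all, of 2] dm m2 by simp
  have G2eq: "gram (d-1) u 2 = n1\<^sup>2 * n2\<^sup>2 - p\<^sup>2"
    using gram2[of "d-1" u] by (simp add: u_def n1_def n2_def p_def ulnorm_sq ulinner_def)
  have h_eq: "h = sqrt (gram (d-1) u 2)" by (simp add: h_def detL_gram u_eq)
  have hpos: "h > 0" using h_eq G2pos by simp
  have h2: "h\<^sup>2 = n1\<^sup>2 * n2\<^sup>2 - p\<^sup>2" using h_eq G2pos G2eq by simp
  have pnp: "p \<le> 0" using hinner by (simp add: p_def)
  have pgt: "- p < n1 * n2"
  proof (rule ccontr)
    assume "\<not> - p < n1 * n2"
    then have "n1 * n2 \<le> - p" by simp
    then have "(n1 * n2)\<^sup>2 \<le> (- p)\<^sup>2" by (rule power_mono) (use n1pos n2pos in simp)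
    moreover have "h\<^sup>2 > 0" using hpos by simp
    ultimately show False using h2 by (simp add: power_mult_distrib)
  qed
  have comb: "\<And>x y. Lf d \<alpha> (\<lambda>i. x * z (k+1) i + y * z (k+2) i) = real_of_int x * e1 + real_of_int y * e2
      \<and> Lf d a2 (\<lambda>i. x * z (k+1) i + y * z (k+2) i) = real_of_int x * s0
      \<and> (ulnorm d (\<lambda>i. x * z (k+1) i + y * z (k+2) i))\<^sup>2 =
          (real_of_int x)\<^sup>2 * n1\<^sup>2 + 2 * real_of_int x * real_of_int y * p + (real_of_int y)\<^sup>2 * n2\<^sup>2"
    using L2z2 by (simp add: Lf_comb2 ulnorm_comb2 e1_def e2_def s0_def n1_def n2_def p_def)
  have e2s0: "e2 * s0 \<ge> 0" using hsign by (simp add: e2_def s0_def a2_def)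
  have e1e2: "e1 * e2 \<ge> 0"
  proof -
    have "(e1 * s0) * (e2 * s0) \<ge> 0" using sgn e2s0 by simp
    then have "(e1 * e2) * s0\<^sup>2 \<ge> 0" by (simp add: power2_eq_square mult_ac)
    moreover have "s0\<^sup>2 > 0" using sgn by (auto simp: zero_less_mult_iff)
    ultimately show ?thesis by (simp add: zero_le_mult_iff)
  qed
  have ysmall: "\<And>y::int. (real_of_int y)\<^sup>2 * n2\<^sup>2 \<le> n2\<^sup>2 \<Longrightarrow> y = -1 \<or> y = 0 \<or> y = 1"
  proof -
    fix y :: int assume "(real_of_int y)\<^sup>2 * n2\<^sup>2 \<le> n2\<^sup>2"
    then have "(real_of_int y)\<^sup>2 \<le> 1" using n2pos by (simp add: mult_le_cancel_right1)
    then have "\<bar>real_of_int y\<bar> \<le> 1" using abs_le_square_iff[of "real_of_int y" 1] by simp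
    then have "\<bar>y\<bar> \<le> 1" by linarith
    then show "y = -1 \<or> y = 0 \<or> y = 1" by linarith
  qed
  have Pi1: "\<forall>w\<in>ivecs d. ulnorm d w \<le> ulnorm d (z (k+2)) \<and> w \<noteq> (\<lambda>i. 0) \<and>
            w \<noteq> z (k+2) \<and> w \<noteq> (\<lambda>i. - z (k+2) i) \<longrightarrow>
            \<bar>Lf d \<alpha> w\<bar> \<ge> \<bar>Lf d \<alpha> (z (k+1))\<bar>"
  proof (intro ballI impI)
    fix w assume w: "w \<in> ivecs d" and hyp: "ulnorm d w \<le> ulnorm d (z (k+2)) \<and> w \<noteq> (\<lambda>i. 0) \<and>
            w \<noteq> z (k+2) \<and> w \<noteq> (\<lambda>i. - z (k+2) i)"
    have wn: "ulnorm d w \<le> n2" using hyp by (simp add: n2_def)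
    from CD[OF w wn] have "\<bar>Lf d \<alpha> w\<bar> \<ge> \<bar>e1\<bar>"
    proof
      assume "\<bar>Lf d \<alpha> w\<bar> \<ge> 1 / (2 * g1)" then show ?thesis using e1le by simp
    next
      assume "\<exists>x y. w = (\<lambda>i. x * z (k+1) i + y * z (k+2) i)"
      then obtain x y where wxy: "w = (\<lambda>i. x * z (k+1) i + y * z (k+2) i)" by blast
      define W where "W = ulnorm d w"
      have W2: "W\<^sup>2 = (real_of_int x)\<^sup>2 * n1\<^sup>2 + 2 * real_of_int x * real_of_int y * p + (real_of_int y)\<^sup>2 * n2\<^sup>2"
        using comb[of x y] wxy by (simp add: W_def)
      have W0: "W \<ge> 0" by (simp add: W_def ulnorm_nonneg)
      have Wle: "W \<le> n2" using wn by (simp add: W_def)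
      have W2le: "W\<^sup>2 \<le> n2\<^sup>2" using Wle W0 by (simp add: power_mono)
      have Lw: "Lf d \<alpha> w = real_of_int x * e1 + real_of_int y * e2" using comb[of x y] wxy by simp
      have Bw: "\<bar>Lf d \<alpha> w - real_of_int x * s0\<bar> \<le> \<rho>2 * n2"
      proof -
        have "\<bar>Lf d \<alpha> w - Lf d a2 w\<bar> \<le> \<rho>2 * W" using B2[of w] by (simp add: W_def)
        also have "\<dots> \<le> \<rho>2 * n2" using Wle \<rho>2nn by (simp add: mult_left_mono)
        finally show ?thesis using comb[of x y] wxy by simp
      qed
      consider "x = 0" | "\<bar>x\<bar> \<ge> 2" | "\<bar>x\<bar> = 1" by linarith
      then show ?thesis
      proof cases
        case 1
        then have "(real_of_int y)\<^sup>2 * n2\<^sup>2 \<le> n2\<^sup>2" using W2 W2le by simp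
        then have "y = -1 \<or> y = 0 \<or> y = 1" by (rule ysmall)
        then have False using hyp wxy 1 by auto
        then show ?thesis ..
      next
        case 2
        then have "\<bar>real_of_int x\<bar> \<ge> 2" by linarith
        then have "\<bar>real_of_int x\<bar> * \<bar>s0\<bar> \<ge> 2 * \<bar>s0\<bar>" by (simp add: mult_right_mono)
        then have "\<bar>Lf d \<alpha> w\<bar> \<ge> 2 * \<bar>s0\<bar> - \<rho>2 * n2" using Bw by (simp add: abs_mult)
        then show ?thesis using e1s0 abss0 r2n1 r2n2 by simp
      next
        case 3
        have x1: "x = 1 \<or> x = -1" using 3 by arith
        then have x2: "(real_of_int x)\<^sup>2 = 1" by auto
        have rx1: "\<bar>real_of_int x\<bar> = 1" using x1 by auto
        have xn0: "x \<noteq> 0" using 3 by auto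
        have "y = 0 \<or> x * y < 0 \<or> y = x \<or> (x * y > 0 \<and> y \<noteq> x)"
        proof -
          have "y \<noteq> 0 \<longrightarrow> x * y \<noteq> 0" using xn0 by simp
          then have "y = 0 \<or> x * y < 0 \<or> x * y > 0" by linarith
          then show ?thesis by blast
        qed
        then consider "y = 0" | "x * y < 0" | "y = x" | "x * y > 0" "y \<noteq> x" by blast
        then show ?thesis
        proof cases
          case 1
          then show ?thesis using Lw rx1 by (simp add: abs_mult)
        next
          case 2
          then have "real_of_int (x * y) < 0" using of_int_less_0_iff by blast
          then have "real_of_int x * real_of_int y < 0" by (simp only: of_int_mult)
          then have a: "real_of_int x * real_of_int y * p \<ge> 0" using pnp by (simp add: mult_nonpos_nonpos)
          have "y \<noteq> 0" using 2 by auto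
          then have "\<bar>y\<bar> \<ge> 1" by simp
          then have "\<bar>real_of_int y\<bar> \<ge> 1" by linarith
          then have "(real_of_int y)\<^sup>2 \<ge> 1" using abs_le_square_iff[of 1 "real_of_int y"] by simp
          then have "(real_of_int y)\<^sup>2 * n2\<^sup>2 \<ge> n2\<^sup>2" by (simp add: mult_le_cancel_right1)
          then have "W\<^sup>2 \<ge> n1\<^sup>2 + n2\<^sup>2" using W2 x2 a by simp
          moreover have "n1\<^sup>2 > 0" using n1pos by simp
          ultimately have False using W2le by linarith
          then show ?thesis ..
        next
          case 3
          then have "Lf d \<alpha> w = real_of_int x * (e1 + e2)" using Lw by (simp add: algebra_simps)
          then have "\<bar>Lf d \<alpha> w\<bar> = \<bar>e1 + e2\<bar>" using rx1 by (simp add: abs_mult)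
          moreover have "\<bar>e1\<bar> \<le> \<bar>e1 + e2\<bar>"
          proof -
            have "e1\<^sup>2 \<le> (e1 + e2)\<^sup>2" using e1e2 by (simp add: power2_sum)
            then show ?thesis using abs_le_square_iff by blast
          qed
          ultimately show ?thesis by simp
        next
          case 4
          define Y where "Y = \<bar>real_of_int y\<bar>"
          have xyY: "real_of_int x * real_of_int y = Y"
          proof -
            have "x * y = \<bar>y\<bar>" using 4 \<open>\<bar>x\<bar> = 1\<close> by (cases "x = 1") (auto simp: zero_less_mult_iff)
            then have "real_of_int (x * y) = real_of_int \<bar>y\<bar>" by simp
            then show ?thesis by (simp add: Y_def)
          qed
          have Y2: "Y \<ge> 2"
          proof -
            have "x * y = \<bar>y\<bar>" using 4 \<open>\<bar>x\<bar> = 1\<close> by (cases "x = 1") (auto simp: zero_less_mult_iff)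
            have "\<bar>y\<bar> \<noteq> 1"
            proof
              assume "\<bar>y\<bar> = 1"
              then have "y = 1 \<or> y = -1" by arith
              then show False using 4 x1 by auto
            qed
            moreover have "y \<noteq> 0" using 4 by auto
            ultimately have "\<bar>y\<bar> \<ge> 2" by linarith
            then show ?thesis by (simp add: Y_def)
          qed
          have YY: "(real_of_int y)\<^sup>2 = Y\<^sup>2" by (simp add: Y_def)
          have "W\<^sup>2 = n1\<^sup>2 + 2 * Y * p + Y\<^sup>2 * n2\<^sup>2" using W2 x2 xyY YY by (simp add: mult.assoc)
          moreover have "2 * Y * p > - 2 * Y * (n1 * n2)"
          proof -
            have "Y * (- p) < Y * (n1 * n2)" using pgt Y2 by (intro mult_strict_left_mono) auto
            then show ?thesis by simp
          qed
          ultimately have "W\<^sup>2 > (Y * n2 - n1)\<^sup>2" by (simp add: power2_diff power_mult_distrib algebra_simps)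
          moreover have "Y * n2 - n1 \<ge> n2"
          proof -
            have "Y * n2 \<ge> 2 * n2" using Y2 n2pos by (simp add: mult_right_mono)
            then show ?thesis using n12 by simp
          qed
          then have "(Y * n2 - n1)\<^sup>2 \<ge> n2\<^sup>2" using n2pos by (simp add: power_mono)
          ultimately have False using W2le by simp
          then show ?thesis ..
        qed
      qed
    qed
    then show "\<bar>Lf d \<alpha> w\<bar> \<ge> \<bar>Lf d \<alpha> (z (k+1))\<bar>" by (simp add: e1_def)
  qed
  have Piii: "\<forall>w\<in>ivecs d. (\<not> (\<exists>t::int. w = (\<lambda>i. t * z (k+1) i))) \<and>
            w \<noteq> z (k+2) \<and> w \<noteq> (\<lambda>i. - z (k+2) i) \<and>
            ulnorm d (z (k+1)) \<le> ulnorm d w \<and> ulnorm d w \<le> ulnorm d (z (k+2)) \<longrightarrow>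
            \<bar>Lf d \<alpha> w\<bar> * ulnorm d w ^ (d-1) \<ge>
              min (1 / (2 * Dq d z (k+1) (d-1)))
                  (Dq d z (k+1) 2 ^ (d-1) / (2 * Dq d z (k+2) (d-1) * Bq d z (k+1) ^ (d-1)))"
  proof (intro ballI impI)
    fix w assume w: "w \<in> ivecs d" and hyp: "(\<not> (\<exists>t::int. w = (\<lambda>i. t * z (k+1) i))) \<and>
            w \<noteq> z (k+2) \<and> w \<noteq> (\<lambda>i. - z (k+2) i) \<and>
            ulnorm d (z (k+1)) \<le> ulnorm d w \<and> ulnorm d w \<le> ulnorm d (z (k+2))"
    define W where "W = ulnorm d w"
    have wn: "ulnorm d w \<le> n2" using hyp by (simp add: n2_def)
    have Wge: "n1 \<le> W" using hyp by (simp add: n1_def W_def)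
    have W0: "W \<ge> 0" by (simp add: W_def ulnorm_nonneg)
    have Wle: "W \<le> n2" using wn by (simp add: W_def)
    have "\<bar>Lf d \<alpha> w\<bar> * W ^ (d-1) \<ge> min (n1 ^ (d-1) / (2 * g1)) ((h / n1) ^ (d-1) / (2 * g2))"
    proof -
      from CD[OF w wn] show ?thesis
      proof
        assume A: "\<bar>Lf d \<alpha> w\<bar> \<ge> 1 / (2 * g1)"
        have "n1 ^ (d-1) \<le> W ^ (d-1)" using Wge n1pos by (simp add: power_mono)
        then have "1 / (2 * g1) * n1 ^ (d-1) \<le> \<bar>Lf d \<alpha> w\<bar> * W ^ (d-1)"
          using A g1pos n1pos by (intro mult_mono) auto
        then show ?thesis by simp
      next
        assume "\<exists>x y. w = (\<lambda>i. x * z (k+1) i + y * z (k+2) i)"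
        then obtain x y where wxy: "w = (\<lambda>i. x * z (k+1) i + y * z (k+2) i)" by blast
        have W2: "W\<^sup>2 = (real_of_int x)\<^sup>2 * n1\<^sup>2 + 2 * real_of_int x * real_of_int y * p + (real_of_int y)\<^sup>2 * n2\<^sup>2"
          using comb[of x y] wxy by (simp add: W_def)
        have W2le: "W\<^sup>2 \<le> n2\<^sup>2" using Wle W0 by (simp add: power_mono)
        have yn0: "y \<noteq> 0"
        proof
          assume "y = 0"
          then have "w = (\<lambda>i. x * z (k+1) i)" using wxy by simp
          then show False using hyp by blast
        qed
        have xn0: "x \<noteq> 0"
        proof
          assume x0: "x = 0"
          then have "(real_of_int y)\<^sup>2 * n2\<^sup>2 \<le> n2\<^sup>2" using W2 W2le by simp
          then have "y = -1 \<or> y = 0 \<or> y = 1" by (rule ysmall)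
          then show False using hyp wxy x0 yn0 by auto
        qed
        have Bw: "\<bar>Lf d \<alpha> w - real_of_int x * s0\<bar> \<le> \<rho>2 * n2"
        proof -
          have "\<bar>Lf d \<alpha> w - Lf d a2 w\<bar> \<le> \<rho>2 * W" using B2[of w] by (simp add: W_def)
          also have "\<dots> \<le> \<rho>2 * n2" using Wle \<rho>2nn by (simp add: mult_left_mono)
          finally show ?thesis using comb[of x y] wxy by simp
        qed
        have "\<bar>x\<bar> \<ge> 1" using xn0 by simp
        then have "\<bar>real_of_int x\<bar> \<ge> 1" by linarith
        then have "\<bar>real_of_int x\<bar> * \<bar>s0\<bar> \<ge> \<bar>s0\<bar>" by (simp add: mult_le_cancel_right1)
        then have "\<bar>Lf d \<alpha> w\<bar> \<ge> \<bar>s0\<bar> - \<rho>2 * n2" using Bw by (simp add: abs_mult)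
        moreover have "1 / g2 - 1 / (2 * g2) = 1 / (2 * g2)" by (simp add: field_simps)
        ultimately have Lge: "\<bar>Lf d \<alpha> w\<bar> \<ge> 1 / (2 * g2)" using abss0 r2n2 by linarith
        have id: "n1\<^sup>2 * W\<^sup>2 - (real_of_int y)\<^sup>2 * h\<^sup>2 = (real_of_int x * n1\<^sup>2 + real_of_int y * p)\<^sup>2"
          unfolding W2 h2 by (simp add: power2_eq_square algebra_simps)
        have "\<bar>y\<bar> \<ge> 1" using yn0 by simp
        then have "\<bar>real_of_int y\<bar> \<ge> 1" by linarith
        then have "(real_of_int y)\<^sup>2 \<ge> 1" using abs_le_square_iff[of 1 "real_of_int y"] by simp
        then have "(real_of_int y)\<^sup>2 * h\<^sup>2 \<ge> h\<^sup>2" by (simp add: mult_le_cancel_right1)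
        then have "(n1 * W)\<^sup>2 \<ge> h\<^sup>2" using id by (simp add: power_mult_distrib) (smt (verit) zero_le_power2)
        then have "h \<le> n1 * W" by (rule power2_le_imp_le) (use n1pos W0 in simp)
        then have "h / n1 \<le> W" using n1pos by (simp add: divide_le_eq mult.commute)
        then have "(h / n1) ^ (d-1) \<le> W ^ (d-1)" using hpos n1pos by (simp add: power_mono)
        then have "1 / (2 * g2) * (h / n1) ^ (d-1) \<le> \<bar>Lf d \<alpha> w\<bar> * W ^ (d-1)"
          using Lge g2pos hpos n1pos by (intro mult_mono) auto
        then show ?thesis by simp
      qed
    qed
    then show "\<bar>Lf d \<alpha> w\<bar> * ulnorm d w ^ (d-1) \<ge>
              min (1 / (2 * Dq d z (k+1) (d-1)))
                  (Dq d z (k+1) 2 ^ (d-1) / (2 * Dq d z (k+2) (d-1) * Bq d z (k+1) ^ (d-1)))"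
      unfolding T1 T2 W_def .
  qed
  show ?thesis using Pi1 Pi2 Pii1 Pii2 Piii by blast
qed

end
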